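(* Let $R\ge2$, $0\le m<2^{R-1}$, and let $\mu$ be a partition of $m$ with $f^\mu$ odd. Then $2^R\notin H(\mu)^{+r}$ for every $1\le r\le 2^{R-1}$, and \[ S_{P_2^{\uparrow}(\mu)}(\mu)=2(-1)^{|H(\mu)|}\,g(H(\mu)). \]
   Context: $f^\lambda$ is the number of standard Young tableaux of shape $\lambda$; $\mathrm{Od}(N)=\pm1$ according as the odd part of $N\ge1$ is $\equiv1$ or $\equiv3\pmod4$. For $\lambda=(\lambda_1\ge\dots\ge\lambda_k>0)$, $H(\lambda):=\{\lambda_i+k-i\}$, $H(\varnothing)=\varnothing$. $X^{+r}:=\{x+r:x\in X\}\cup\{0,\dots,r-1\}$. For $1\le r\le2^R$ with $2^R\notin H(\mu)^{+r}$, $\lambda_{[r]}$ is the partition with $H(\lambda_{[r]})=(H(\mu)^{+r}\cup\{2^R\})\setminus\{0\}$. $P_2^{\uparrow}(\mu):=\{\lambda_{[r]}:1\le r\le2^{R-1}\}$. For a finite set $L$ of partitions, $S_L(\mu):=\frac{1}{\mathrm{Od}(f^\mu)}\sum_{\lambda\in L}\mathrm{Od}(f^\lambda)$. For finite $X\subset\mathbb{Z}_{\ge0}$, the parity gap $g(X)$ is the number of even elements of $X$ minus the number of odd elements of $X$. *)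

theory Defs
  imports Complex_Main "HOL-Library.FuncSet" "HOL-Computational_Algebra.Primes"
begin

definition is_partition :: "nat list \<Rightarrow> bool" where
  "is_partition lam \<longleftrightarrow> sorted_wrt (\<ge>) lam \<and> (\<forall>x\<in>set lam. 0 < x)"

definition cells :: "nat list \<Rightarrow> (nat \<times> nat) set" where
  "cells lam = {(i, j). i < length lam \<and> j < lam ! i}"

definition SYT :: "nat list \<Rightarrow> ((nat \<times> nat) \<Rightarrow> nat) set" where
  "SYT lam = {T. T \<in> cells lam \<rightarrow>\<^sub>E {1..sum_list lam}
      \<and> bij_betw T (cells lam) {1..sum_list lam}
      \<and> (\<forall>i j. (i, Suc j) \<in> cells lam \<longrightarrow> T (i, j) < T (i, Suc j))
      \<and> (\<forall>i j. (Suc i, j) \<in> cells lam \<longrightarrow> T (i, j) < T (Suc i, j))}"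

definition num_syt :: "nat list \<Rightarrow> nat" where
  "num_syt lam = card (SYT lam)"

text \<open>Od(N): +1 or -1 according as the odd part of N is 1 or 3 mod 4 (meant for N \<ge> 1).\<close>
definition odd_part :: "nat \<Rightarrow> nat" where
  "odd_part N = N div 2 ^ multiplicity (2::nat) N"

definition Od :: "nat \<Rightarrow> int" where
  "Od N = (if odd_part N mod 4 = 1 then 1 else -1)"

text \<open>H(lam) = {lam_i + k - i : 1 \<le> i \<le> k} (0-indexed below).\<close>
definition H :: "nat list \<Rightarrow> nat set" where
  "H lam = {lam ! i + length lam - 1 - i | i. i < length lam}"

definition shift :: "nat set \<Rightarrow> nat \<Rightarrow> nat set" where
  "shift X r = (\<lambda>x. x + r) ` X \<union> {0..<r}"

definition lam_r :: "nat \<Rightarrow> nat list \<Rightarrow> nat \<Rightarrow> nat list" where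
  "lam_r R mu r = (THE lam. is_partition lam \<and> H lam = (shift (H mu) r \<union> {2 ^ R}) - {0})"

definition P2up :: "nat \<Rightarrow> nat list \<Rightarrow> nat list set" where
  "P2up R mu = {lam_r R mu r | r. 1 \<le> r \<and> r \<le> 2 ^ (R - 1)}"

definition S_L :: "nat list set \<Rightarrow> nat list \<Rightarrow> real" where
  "S_L L mu = (1 / real_of_int (Od (num_syt mu))) * (\<Sum>lam\<in>L. real_of_int (Od (num_syt lam)))"

definition parity_gap :: "nat set \<Rightarrow> int" where
  "parity_gap X = int (card {x\<in>X. even x}) - int (card {x\<in>X. odd x})"

end

theory Submission
  imports Defs
begin

lemma odd_part_eq:
  assumes "odd (q::nat)" shows "odd_part (2^v * q) = q"
proof -
  have "multiplicity (2::nat) (2^v * q) = v"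
    by (rule multiplicity_decomposeI[of _ _ _ q]) (use assms in auto)
  then show ?thesis unfolding odd_part_def using assms by simp
qed

lemma odd_part_decomp:
  assumes "(n::nat) > 0"
  obtains v q where "n = 2^v * q" "odd q"
proof -
  have "n \<noteq> 0" using assms by simp
  then obtain y where "n = 2 ^ multiplicity 2 n * y" "\<not> 2 dvd y"
    using multiplicity_decompose'[of n "2::nat"] by auto
  then show ?thesis using that by auto
qed

lemma Od_odd: "odd (q::nat) \<Longrightarrow> Od (2^v * q) = (if q mod 4 = 1 then 1 else -1)"
  by (simp add: Od_def odd_part_eq)

lemma odd_mod4: "odd (q::nat) \<Longrightarrow> q mod 4 = 1 \<or> q mod 4 = 3"
  by presburger

lemma Od_mult:
  assumes "(a::nat) > 0" "b > 0" shows "Od (a*b) = Od a * Od b"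
proof -
  obtain va oa where a: "a = 2^va*oa" "odd oa" using odd_part_decomp assms(1) by blast
  obtain vb ob where b: "b = 2^vb*ob" "odd ob" using odd_part_decomp assms(2) by blast
  have ab: "a*b = 2^(va+vb) * (oa*ob)" using a b by (simp add: power_add algebra_simps)
  have "odd (oa*ob)" using a b by simp
  then have 1: "Od (a*b) = (if (oa*ob) mod 4 = 1 then 1 else -1)" unfolding ab by (rule Od_odd)
  have 2: "Od a = (if oa mod 4 = 1 then 1 else -1)" unfolding a(1) by (rule Od_odd[OF a(2)])
  have 3: "Od b = (if ob mod 4 = 1 then 1 else -1)" unfolding b(1) by (rule Od_odd[OF b(2)])
  have "(oa*ob) mod 4 = ((oa mod 4) * (ob mod 4)) mod 4" by (simp add: mod_mult_eq)
  then show ?thesis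
    using odd_mod4[OF a(2)] odd_mod4[OF b(2)] unfolding 1 2 3 by auto
qed

lemma Od_sq: "Od a * Od a = 1"
  by (simp add: Od_def)

lemma Od_pm: "Od a = 1 \<or> Od a = -1"
  by (simp add: Od_def)

lemma Od_prod:
  assumes "finite A" "\<forall>x\<in>A. f x > (0::nat)"
  shows "Od (\<Prod>x\<in>A. f x) = (\<Prod>x\<in>A. Od (f x))"
  using assms
proof (induction A rule: finite_induct)
  case empty then show ?case by (simp add: Od_def odd_part_def)
next
  case (insert a A)
  have "(\<Prod>x\<in>A. f x) > 0" using insert by (simp add: prod_pos)
  then show ?case using insert by (simp add: Od_mult)
qed

lemma Od_one: "Od 1 = 1" by (simp add: Od_def odd_part_def)

lemma Od_plus:
  assumes "0 < i" "i < 2^(R-1)" "R \<ge> 2"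
  shows "Od (2^R + i) = Od i"
proof -
  obtain v q where i: "i = 2^v * q" "odd q" using odd_part_decomp assms(1) by blast
  have "q \<ge> 1" using i by presburger
  then have "2^v \<le> i" using i by simp
  then have "(2::nat)^v < 2^(R-1)" using assms by linarith
  then have "v < R - 1" by simp
  then have "\<exists>d. R = v + 2 + d" by (intro exI[of _ "R - v - 2"]) simp
  then obtain d where d: "R = v + 2 + d" by blast
  have e: "2^R + i = 2^v * (4 * 2^d + q)" using i d by (simp add: power_add algebra_simps)
  have "odd (4*2^d + q)" using i by simp
  moreover have "(4 * 2^d + q) mod 4 = q mod 4" by simp
  ultimately show ?thesis using e i by (simp add: Od_odd)
qed

lemma mod4_aux0: "((a::nat) + q) mod 4 = 0 \<Longrightarrow> (q mod 4 = 1 \<longrightarrow> a mod 4 = 3) \<and> (q mod 4 = 3 \<longrightarrow> a mod 4 = 1)"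
  by presburger

lemma mod4_aux: "(q::nat) < 4*M \<Longrightarrow> (q mod 4 = 1 \<longrightarrow> (4*M - q) mod 4 = 3) \<and> (q mod 4 = 3 \<longrightarrow> (4*M - q) mod 4 = 1)"
proof -
  assume "q < 4*M"
  then have "((4*M - q) + q) mod 4 = 0" by simp
  then show ?thesis by (rule mod4_aux0)
qed

lemma Od_minus:
  assumes "0 < x" "x < 2^R" "x \<noteq> 2^(R-1)"
  shows "Od (2^R - x) = - Od x"
proof -
  obtain v q where i: "x = 2^v * q" "odd q" using odd_part_decomp assms(1) by blast
  have "q \<ge> 1" using i by presburger
  then have "2^v \<le> x" using i by simp
  then have "(2::nat)^v < 2^R" using assms by linarith
  then have "v < R" by simp
  have "v \<noteq> R - 1"
  proof
    assume v: "v = R - 1"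
    have "R \<ge> 1" using \<open>v < R\<close> by simp
    then have "R = Suc v" using v by simp
    then have "(2::nat)^R = 2 * 2^v" by simp
    then have "q < 2" using assms(2) i by simp
    then have "q = 1" using i by presburger
    then show False using assms(3) i v by simp
  qed
  then have "\<exists>d. R = v + 2 + d" using \<open>v < R\<close> by (intro exI[of _ "R - v - 2"]) simp
  then obtain d where d: "R = v + 2 + d" by blast
  have olt: "q < 4 * 2^d" using assms(2) i d by (simp add: power_add)
  have e: "2^R - x = 2^v * (4 * 2^d - q)" using i d by (simp add: power_add algebra_simps diff_mult_distrib2)
  have "odd (4*2^d - q)" using i olt by simp
  moreover have "q mod 4 = 1 \<Longrightarrow> (4 * 2^d - q) mod 4 = 3"
    using olt mod4_aux by blast
  moreover have "q mod 4 = 3 \<Longrightarrow> (4 * 2^d - q) mod 4 = 1"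
    using olt mod4_aux by blast
  ultimately show ?thesis using e i odd_mod4[OF i(2)] by (auto simp: Od_odd)
qed

definition DD :: "(real \<Rightarrow> real) \<Rightarrow> real set \<Rightarrow> real" where
  "DD f X = (\<Sum>x\<in>X. f x / (\<Prod>y\<in>X-{x}. (x - y)))"

lemma DD_R1:
  assumes "finite X" "a \<in> X"
  shows "DD (\<lambda>t. (t - a) * f t) X = DD f (X - {a})"
proof -
  have X: "X = insert a (X - {a})" using assms by auto
  have "DD (\<lambda>t. (t - a) * f t) X = (\<Sum>x\<in>X. (x - a) * f x / (\<Prod>y\<in>X-{x}. (x - y)))"
    unfolding DD_def by simp
  also have "\<dots> = (\<Sum>x\<in>X - {a}. (x - a) * f x / (\<Prod>y\<in>X-{x}. (x - y)))"
    using sum.remove[OF assms(1) assms(2), of "\<lambda>x. (x - a) * f x / (\<Prod>y\<in>X-{x}. (x - y))"] by simp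
  also have "\<dots> = (\<Sum>x\<in>X - {a}. f x / (\<Prod>y\<in>X-{a}-{x}. (x - y)))"
  proof (rule sum.cong[OF refl])
    fix x assume x: "x \<in> X - {a}"
    have "X - {x} = insert a (X - {a} - {x})" using x assms by auto
    then have "(\<Prod>y\<in>X-{x}. (x - y)) = (x - a) * (\<Prod>y\<in>X-{a}-{x}. (x - y))"
      using assms(1) by simp
    moreover have "x - a \<noteq> 0" using x by simp
    ultimately show "(x - a) * f x / (\<Prod>y\<in>X-{x}. (x - y)) = f x / (\<Prod>y\<in>X-{a}-{x}. (x - y))"
      by simp
  qed
  finally show ?thesis unfolding DD_def .
qed

lemma DD_lin: "DD (\<lambda>t. c * f t + g t) X = c * DD f X + DD g X"
  unfolding DD_def by (simp add: sum.distrib sum_distrib_left add_divide_distrib)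

lemma DD_cmult: "DD (\<lambda>t. c * f t) X = c * DD f X"
  unfolding DD_def by (simp add: sum_distrib_left)

lemma DD_sum: "finite A \<Longrightarrow> DD (\<lambda>t. \<Sum>S\<in>A. g S t) X = (\<Sum>S\<in>A. DD (g S) X)"
  unfolding DD_def by (simp add: sum_divide_distrib[symmetric] sum.swap[of _ X] ) 

lemma DD_step:
  assumes "finite X" "a \<in> X"
  shows "DD (\<lambda>t. t * f t) X = DD f (X - {a}) + a * DD f X"
proof -
  have "DD (\<lambda>t. t * f t) X = DD (\<lambda>t. (t - a) * f t + a * f t) X"
    by (simp add: algebra_simps)
  also have "\<dots> = DD (\<lambda>t. (t - a) * f t) X + DD (\<lambda>t. a * f t) X"
    unfolding DD_def by (simp add: sum.distrib add_divide_distrib)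
  also have "\<dots> = DD f (X - {a}) + a * DD f X"
    using DD_R1[OF assms] DD_cmult by simp
  finally show ?thesis .
qed

lemma DD_pow:
  "finite X \<Longrightarrow> card X = k \<Longrightarrow>
     (\<forall>j. j + 2 \<le> k \<longrightarrow> DD (\<lambda>t. t^j) X = 0) \<and> (\<forall>j. j + 1 = k \<longrightarrow> DD (\<lambda>t. t^j) X = 1)"
proof (induction k arbitrary: X rule: less_induct)
  case (less k)
  show ?case
  proof (cases "k \<le> 1")
    case True
    show ?thesis
    proof (intro conjI allI impI)
      fix j assume "j + 2 \<le> k" then show "DD (\<lambda>t. t^j) X = 0" using True by simp
    next
      fix j assume j: "j + 1 = k"
      then have "j = 0" "k = 1" using True by auto
      then obtain a where "X = {a}" using less.prems card_1_singletonE by blast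
      then show "DD (\<lambda>t. t^j) X = 1" using \<open>j = 0\<close> by (simp add: DD_def)
    qed
  next
    case False
    then obtain a where a: "a \<in> X" using less.prems by fastforce
    have "card (X - {a}) \<ge> 1" using False less.prems a by simp
    then have "X - {a} \<noteq> {}" by (metis card.empty not_one_le_zero)
    then obtain b where b: "b \<in> X - {a}" by blast
    have ca: "card (X - {a}) = k - 1" and cb: "card (X - {b}) = k - 1"
      using a b less.prems by auto

    note IHa = less.IH[of "k-1" "X - {a}", OF _ _ ca] and IHb = less.IH[of "k-1" "X - {b}", OF _ _ cb]
    have zero: "DD (\<lambda>t. t^j) X = 0" if j: "j + 2 \<le> k" for j
    proof -
      have sa: "DD (\<lambda>t. t * t^j) X = DD (\<lambda>t. t^j) (X - {a}) + a * DD (\<lambda>t. t^j) X"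
        using DD_step[OF less.prems(1) a, of "\<lambda>t. t^j"] .
      have sb: "DD (\<lambda>t. t * t^j) X = DD (\<lambda>t. t^j) (X - {b}) + b * DD (\<lambda>t. t^j) X"
        using DD_step[OF less.prems(1), of b "\<lambda>t. t^j"] b by blast
      have "DD (\<lambda>t. t^j) (X - {a}) = DD (\<lambda>t. t^j) (X - {b})"
      proof (cases "j + 2 \<le> k - 1")
        case True
        then show ?thesis using IHa IHb less.prems False by auto
      next
        case False
        then have "j + 1 = k - 1" using j by simp
        then show ?thesis using IHa IHb less.prems \<open>\<not> k \<le> 1\<close> by auto
      qed
      then have "a * DD (\<lambda>t. t^j) X = b * DD (\<lambda>t. t^j) X" using sa sb by linarith
      then have "(a - b) * DD (\<lambda>t. t^j) X = 0" by (simp add: left_diff_distrib)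
      moreover have "a \<noteq> b" using b by auto
      ultimately show ?thesis by simp
    qed
    show ?thesis
    proof (intro conjI allI impI)
      fix j assume "j + 2 \<le> k" then show "DD (\<lambda>t. t^j) X = 0" using zero by simp
    next
      fix j assume j: "j + 1 = k"
      then obtain i where i: "j = Suc i" using False by (cases j) auto
      have "DD (\<lambda>t. t^j) X = DD (\<lambda>t. t * t^i) X" using i by simp
      also have "\<dots> = DD (\<lambda>t. t^i) (X - {a}) + a * DD (\<lambda>t. t^i) X"
        using DD_step[OF less.prems(1) a, of "\<lambda>t. t^i"] .
      also have "DD (\<lambda>t. t^i) X = 0" using zero[of i] i j by simp
      also have "DD (\<lambda>t. t^i) (X - {a}) = 1" using IHa less.prems False i j by auto
      finally show "DD (\<lambda>t. t^j) X = 1" by simp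
    qed
  qed
qed

lemma DD_id:
  assumes "finite Z"
  shows "DD (\<lambda>t. t) Z = (if card Z = 1 then \<Sum>Z else if card Z = 2 then 1 else 0)"
proof -
  have p: "(\<forall>j. j + 2 \<le> card Z \<longrightarrow> DD (\<lambda>t. t^j) Z = 0) \<and> (\<forall>j. j + 1 = card Z \<longrightarrow> DD (\<lambda>t. t^j) Z = 1)"
    using DD_pow[OF assms refl] .
  consider "card Z = 0" | "card Z = 1" | "card Z = 2" | "card Z \<ge> 3" by linarith
  then show ?thesis
  proof cases
    case 1 then have "Z = {}" using assms by simp
    then show ?thesis by (simp add: DD_def)
  next
    case 2 then obtain z where "Z = {z}" using card_1_singletonE by blast
    then show ?thesis by (simp add: DD_def)
  next
    case 3 then show ?thesis using p[THEN conjunct2, rule_format, of 1] by simp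
  next
    case 4 then show ?thesis using p[THEN conjunct1, rule_format, of 1] by simp
  qed
qed

lemma DD_prod_sub:
  assumes "finite S"
  shows "\<And>X. finite X \<Longrightarrow> S \<subseteq> X \<Longrightarrow> DD (\<lambda>t. (\<Prod>y\<in>S. (t - y)) * f t) X = DD f (X - S)"
  using assms
proof (induction S rule: finite_induct)
  case empty then show ?case by simp
next
  case (insert b S X)
  have bX: "b \<in> X" using insert by auto
  have "DD (\<lambda>t. (\<Prod>y\<in>insert b S. (t - y)) * f t) X = DD (\<lambda>t. (t - b) * ((\<Prod>y\<in>S. (t - y)) * f t)) X"
    using insert by (simp add: mult.assoc)
  also have "\<dots> = DD (\<lambda>t. (\<Prod>y\<in>S. (t - y)) * f t) (X - {b})"
    by (rule DD_R1[OF insert.prems(1) bX])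
  also have "\<dots> = DD f (X - {b} - S)"
    using insert by (intro insert.IH) auto
  also have "X - {b} - S = X - insert b S" by auto
  finally show ?case .
qed

lemma sum_signed_DD:
  assumes "finite X"
  shows "(\<Sum>Z\<in>Pow X. (-1)^card Z * DD (\<lambda>t. t) Z) = real (card X choose 2) - \<Sum>X"
proof -
  have fin: "finite (Pow X)" using assms by simp
  have "(\<Sum>Z\<in>Pow X. (-1)^card Z * DD (\<lambda>t. t) Z)
      = (\<Sum>Z\<in>Pow X. (if card Z = 1 then - \<Sum>Z else 0) + (if card Z = 2 then 1 else 0))"
  proof (rule sum.cong[OF refl])
    fix Z assume "Z \<in> Pow X"
    then have "finite Z" using assms finite_subset by blast
    then show "(-1)^card Z * DD (\<lambda>t. t) Z = (if card Z = 1 then - \<Sum>Z else 0) + (if card Z = 2 then 1 else 0)"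
      by (simp add: DD_id)
  qed
  also have "\<dots> = (\<Sum>Z\<in>{Z\<in>Pow X. card Z = 1}. - \<Sum>Z) + (\<Sum>Z\<in>{Z\<in>Pow X. card Z = 2}. 1)"
    using sum.inter_filter[OF fin, of "\<lambda>Z. - \<Sum>Z" "\<lambda>Z. card Z = 1"]
      sum.inter_filter[OF fin, of "\<lambda>Z. 1::real" "\<lambda>Z. card Z = 2"]
    by (simp only: sum.distrib)
  also have "{Z\<in>Pow X. card Z = 1} = (\<lambda>x. {x}) ` X"
    by (auto simp: card_1_singleton_iff)
  also have "(\<Sum>Z\<in>(\<lambda>x. {x}) ` X. - \<Sum>Z) = (\<Sum>x\<in>X. - x)"
    by (subst sum.reindex) (auto simp: inj_on_def)
  also have "(\<Sum>Z\<in>{Z\<in>Pow X. card Z = 2}. (1::real)) = real (card X choose 2)"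
  proof -
    have "{Z\<in>Pow X. card Z = 2} = {Z. Z \<subseteq> X \<and> card Z = 2}" by auto
    then show ?thesis using n_subsets[OF assms, of 2] by simp
  qed
  finally show ?thesis by (simp add: sum_negf)
qed

lemma key_identity:
  assumes "finite X"
  shows "(\<Sum>x\<in>X. x * (\<Prod>y\<in>X-{x}. (x - 1 - y) / (x - y))) = \<Sum>X - real (card X choose 2)"
proof -
  have "(\<Sum>x\<in>X. x * (\<Prod>y\<in>X-{x}. (x - 1 - y) / (x - y)))
      = - DD (\<lambda>t. t * (\<Prod>y\<in>X. ((t - y) + (-1)))) X"
    unfolding DD_def
  proof (subst sum_negf[symmetric], rule sum.cong[OF refl])
    fix x assume x: "x \<in> X"
    have "(\<Prod>y\<in>X. ((x - y) + (-1))) = ((x - x) + (-1)) * (\<Prod>y\<in>X-{x}. ((x - y) + (-1)))"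
      by (rule prod.remove[OF assms x])
    then have "(\<Prod>y\<in>X. ((x - y) + (-1))) = - (\<Prod>y\<in>X-{x}. (x - y - 1))" by simp
    moreover have "prod ((-) (x - 1)) (X - {x}) = (\<Prod>y\<in>X-{x}. x - y - 1)"
      by (rule prod.cong) auto
    ultimately show "x * (\<Prod>y\<in>X-{x}. (x - 1 - y) / (x - y)) =
        - (x * (\<Prod>y\<in>X. ((x - y) + (-1))) / (\<Prod>y\<in>X-{x}. (x - y)))"
      by (simp add: prod_dividef)
  qed
  also have "(\<lambda>t. t * (\<Prod>y\<in>X. ((t - y) + (-1))))
      = (\<lambda>t. \<Sum>S\<in>Pow X. (-1)^card (X - S) * ((\<Prod>y\<in>S. (t - y)) * t))"
  proof
    fix t
    show "t * (\<Prod>y\<in>X. ((t - y) + (-1))) = (\<Sum>S\<in>Pow X. (-1)^card (X - S) * ((\<Prod>y\<in>S. (t - y)) * t))"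
    proof -
      have "(\<Prod>y\<in>X. ((t - y) + (-1))) = (\<Sum>S\<in>Pow X. (\<Prod>y\<in>S. (t - y)) * (\<Prod>y\<in>X-S. (-1::real)))"
        by (rule prod_add[OF assms])
      then have "t * (\<Prod>y\<in>X. ((t - y) + (-1))) = (\<Sum>S\<in>Pow X. t * ((\<Prod>y\<in>S. (t - y)) * (-1)^card (X - S)))"
        by (simp add: sum_distrib_left)
      also have "\<dots> = (\<Sum>S\<in>Pow X. (-1)^card (X - S) * ((\<Prod>y\<in>S. (t - y)) * t))"
        by (rule sum.cong[OF refl]) (simp only: mult_ac)
      finally show ?thesis .
    qed
  qed
  also have "DD (\<lambda>t. \<Sum>S\<in>Pow X. (-1)^card (X - S) * ((\<Prod>y\<in>S. (t - y)) * t)) X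
      = (\<Sum>S\<in>Pow X. (-1)^card (X - S) * DD (\<lambda>t. t) (X - S))"
  proof -
    have "DD (\<lambda>t. \<Sum>S\<in>Pow X. (-1)^card (X - S) * ((\<Prod>y\<in>S. (t - y)) * t)) X
        = (\<Sum>S\<in>Pow X. DD (\<lambda>t. (-1)^card (X - S) * ((\<Prod>y\<in>S. (t - y)) * t)) X)"
      using assms by (simp add: DD_sum)
    also have "\<dots> = (\<Sum>S\<in>Pow X. (-1)^card (X - S) * DD (\<lambda>t. t) (X - S))"
    proof (rule sum.cong[OF refl])
      fix S assume S: "S \<in> Pow X"
      then have "finite S" using assms finite_subset by blast
      then show "DD (\<lambda>t. (-1)^card (X - S) * ((\<Prod>y\<in>S. (t - y)) * t)) X = (-1)^card (X - S) * DD (\<lambda>t. t) (X - S)"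
        using DD_prod_sub[of S X "\<lambda>t. t"] assms S by (simp add: DD_cmult)
    qed
    finally show ?thesis .
  qed
  also have "(\<Sum>S\<in>Pow X. (-1)^card (X - S) * DD (\<lambda>t. t) (X - S)) = (\<Sum>Z\<in>Pow X. (-1)^card Z * DD (\<lambda>t. t) Z)"
  proof -
    have "inj_on (\<lambda>S. X - S) (Pow X)" by (auto simp: inj_on_def)
    moreover have "(\<lambda>S. X - S) ` Pow X = Pow X" by auto
    ultimately show ?thesis
      using sum.reindex[of "\<lambda>S. X - S" "Pow X" "\<lambda>Z. (-1)^card Z * DD (\<lambda>t. t) Z"] by simp
  qed
  also have "\<dots> = real (card X choose 2) - \<Sum>X" by (rule sum_signed_DD[OF assms])
  finally show ?thesis by simp
qed

definition SYTs :: "(nat \<times> nat) set \<Rightarrow> ((nat \<times> nat) \<Rightarrow> nat) set" where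
  "SYTs D = {T. T \<in> D \<rightarrow>\<^sub>E {1..card D} \<and> bij_betw T D {1..card D}
      \<and> (\<forall>i j. (i, Suc j) \<in> D \<and> (i, j) \<in> D \<longrightarrow> T (i, j) < T (i, Suc j))
      \<and> (\<forall>i j. (Suc i, j) \<in> D \<and> (i, j) \<in> D \<longrightarrow> T (i, j) < T (Suc i, j))}"

definition Cor :: "(nat \<times> nat) set \<Rightarrow> (nat \<times> nat) set" where
  "Cor D = {c \<in> D. (fst c, Suc (snd c)) \<notin> D \<and> (Suc (fst c), snd c) \<notin> D}"

lemma SYTs_finite: "finite D \<Longrightarrow> finite (SYTs D)"
proof -
  assume "finite D"
  then have "finite (D \<rightarrow>\<^sub>E {1..card D})" by (simp add: finite_PiE)
  then show ?thesis by (rule finite_subset[rotated]) (auto simp: SYTs_def)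
qed

lemma SYTs_empty: "card (SYTs {}) = 1"
proof -
  have "SYTs {} = {\<lambda>_. undefined}"
    by (auto simp: SYTs_def bij_betw_def)
  then show ?thesis by simp
qed

lemma SYTs_fix_card:
  assumes fin: "finite D" and c: "c \<in> Cor D"
  shows "card {T \<in> SYTs D. T c = card D} = card (SYTs (D - {c}))"
proof -
  define n where "n = card D"
  have cD: "c \<in> D" using c by (simp add: Cor_def)
  have cn: "card (D - {c}) = n - 1" using fin cD by (simp add: n_def)
  have n1: "n \<ge> 1" using fin cD n_def by (metis card_0_eq empty_iff less_one not_le)
  let ?A = "{T \<in> SYTs D. T c = n}"
  let ?B = "SYTs (D - {c})"
  let ?f = "\<lambda>T. T(c := undefined)"
  let ?g = "\<lambda>T. T(c := n)"
  have "bij_betw ?f ?A ?B"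
  proof (rule bij_betw_byWitness[where f' = ?g])
    show "\<forall>a\<in>?A. ?g (?f a) = a" by auto
    show "\<forall>b\<in>?B. ?f (?g b) = b"
    proof
      fix b assume "b \<in> ?B"
      then have "b \<in> extensional (D - {c})" by (auto simp: SYTs_def PiE_def)
      then have "b c = undefined" by (rule extensional_arb) simp
      then show "?f (?g b) = b" by auto
    qed
    show "?f ` ?A \<subseteq> ?B"
    proof
      fix T' assume "T' \<in> ?f ` ?A"
      then obtain T where T: "T \<in> SYTs D" "T c = n" and T': "T' = ?f T" by blast
      have Tpi: "T \<in> D \<rightarrow>\<^sub>E {1..n}" and Tb: "bij_betw T D {1..n}"
        and Th: "\<forall>i j. (i, Suc j) \<in> D \<and> (i, j) \<in> D \<longrightarrow> T (i, j) < T (i, Suc j)"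
        and Tv: "\<forall>i j. (Suc i, j) \<in> D \<and> (i, j) \<in> D \<longrightarrow> T (i, j) < T (Suc i, j)"
        using T(1) by (auto simp: SYTs_def n_def)
      have inj: "inj_on T D" using Tb bij_betw_def by blast
      have img: "T ` (D - {c}) = {1..n} - {n}"
        using Tb inj cD T(2) by (simp add: bij_betw_def inj_on_image_set_diff[OF inj] )
      have "{1..n} - {n} = {1..n-1}" using n1 by auto
      then have img': "T ` (D - {c}) = {1..n-1}" using img by simp
      have "T' \<in> (D - {c}) \<rightarrow>\<^sub>E {1..n-1}"
      proof (rule PiE_I)
        fix x assume x: "x \<in> D - {c}"
        then have "T x \<in> T ` (D - {c})" by blast
        then show "T' x \<in> {1..n-1}" using img' T' x by simp
      next
        fix x assume x: "x \<notin> D - {c}"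
        show "T' x = undefined"
        proof (cases "x = c")
          case True then show ?thesis using T' by simp
        next
          case False
          then have "x \<notin> D" using x by simp
          moreover have "T \<in> extensional D" using Tpi by (simp add: PiE_def)
          ultimately show ?thesis using T' False extensional_arb by fastforce
        qed
      qed
      moreover have "bij_betw T' (D - {c}) {1..n-1}"
      proof -
        have "bij_betw T (D - {c}) {1..n-1}" using inj img' by (simp add: bij_betw_def inj_on_diff)
        moreover have "bij_betw T' (D - {c}) {1..n-1} = bij_betw T (D - {c}) {1..n-1}"
          by (rule bij_betw_cong) (simp add: T')
        ultimately show ?thesis by simp
      qed
      moreover have "\<forall>i j. (i, Suc j) \<in> D - {c} \<and> (i, j) \<in> D - {c} \<longrightarrow> T' (i, j) < T' (i, Suc j)"
        using Th T' by auto
      moreover have "\<forall>i j. (Suc i, j) \<in> D - {c} \<and> (i, j) \<in> D - {c} \<longrightarrow> T' (i, j) < T' (Suc i, j)"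
        using Tv T' by auto
      ultimately show "T' \<in> ?B" by (simp add: SYTs_def cn)
    qed
    show "?g ` ?B \<subseteq> ?A"
    proof
      fix T assume "T \<in> ?g ` ?B"
      then obtain T' where T': "T' \<in> ?B" and T: "T = ?g T'" by blast
      have Tpi: "T' \<in> (D - {c}) \<rightarrow>\<^sub>E {1..n-1}" and Tb: "bij_betw T' (D - {c}) {1..n-1}"
        and Th: "\<forall>i j. (i, Suc j) \<in> D - {c} \<and> (i, j) \<in> D - {c} \<longrightarrow> T' (i, j) < T' (i, Suc j)"
        and Tv: "\<forall>i j. (Suc i, j) \<in> D - {c} \<and> (i, j) \<in> D - {c} \<longrightarrow> T' (i, j) < T' (Suc i, j)"
        using T' by (auto simp: SYTs_def cn)
      have range: "\<And>x. x \<in> D - {c} \<Longrightarrow> T' x \<in> {1..n-1}" by (rule PiE_mem[OF Tpi])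
      have "T \<in> D \<rightarrow>\<^sub>E {1..n}"
      proof (rule PiE_I)
        fix x assume x: "x \<in> D"
        show "T x \<in> {1..n}"
        proof (cases "x = c")
          case True then show ?thesis using T n1 by simp
        next
          case False then show ?thesis using T range[of x] x by auto
        qed
      next
        fix x assume x: "x \<notin> D"
        then have "x \<noteq> c" using cD by auto
        moreover have "T' \<in> extensional (D - {c})" using Tpi by (simp add: PiE_def)
        then have "T' x = undefined" using x extensional_arb by fastforce
        ultimately show "T x = undefined" using T by simp
      qed
      moreover have "bij_betw T D {1..n}"
      proof -
        have "bij_betw T (D - {c}) {1..n-1} = bij_betw T' (D - {c}) {1..n-1}"
          by (rule bij_betw_cong) (simp add: T)
        then have b1: "bij_betw T (D - {c}) {1..n-1}" using Tb by simp
        have "n \<notin> {1..n-1}" by auto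
        moreover have "T c = n" using T by simp
        ultimately have "bij_betw T ((D - {c}) \<union> {c}) ({1..n-1} \<union> {n})"
          using b1 notIn_Un_bij_betw3[of c "D - {c}" T "{1..n-1}"] by simp
        moreover have "(D - {c}) \<union> {c} = D" using cD by auto
        moreover have "{1..n-1} \<union> {n} = {1..n}" using n1 by auto
        ultimately show ?thesis by simp
      qed
      moreover have "\<forall>i j. (i, Suc j) \<in> D \<and> (i, j) \<in> D \<longrightarrow> T (i, j) < T (i, Suc j)"
      proof (intro allI impI)
        fix i j assume a: "(i, Suc j) \<in> D \<and> (i, j) \<in> D"
        have "(i, j) \<noteq> c" using a c by (auto simp: Cor_def)
        show "T (i, j) < T (i, Suc j)"
        proof (cases "(i, Suc j) = c")
          case True
          then show ?thesis using range[of "(i,j)"] a T \<open>(i, j) \<noteq> c\<close> n1 by auto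
        next
          case False
          then show ?thesis using Th a T \<open>(i, j) \<noteq> c\<close> by auto
        qed
      qed
      moreover have "\<forall>i j. (Suc i, j) \<in> D \<and> (i, j) \<in> D \<longrightarrow> T (i, j) < T (Suc i, j)"
      proof (intro allI impI)
        fix i j assume a: "(Suc i, j) \<in> D \<and> (i, j) \<in> D"
        have "(i, j) \<noteq> c" using a c by (auto simp: Cor_def)
        show "T (i, j) < T (Suc i, j)"
        proof (cases "(Suc i, j) = c")
          case True
          then show ?thesis using range[of "(i,j)"] a T \<open>(i, j) \<noteq> c\<close> n1 by auto
        next
          case False
          then show ?thesis using Tv a T \<open>(i, j) \<noteq> c\<close> by auto
        qed
      qed
      moreover have "T c = n" using T by simp
      ultimately show "T \<in> ?A" by (simp add: SYTs_def n_def)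
    qed
  qed
  then show ?thesis using n_def bij_betw_same_card by blast
qed

lemma SYTs_branch:
  assumes fin: "finite D" and ne: "D \<noteq> {}"
  shows "card (SYTs D) = (\<Sum>c\<in>Cor D. card (SYTs (D - {c})))"
proof -
  define n where "n = card D"
  have n1: "n \<ge> 1" using fin ne n_def by (simp add: Suc_leI card_gt_0_iff)
  have "SYTs D = (\<Union>c\<in>Cor D. {T \<in> SYTs D. T c = n})"
  proof
    show "SYTs D \<subseteq> (\<Union>c\<in>Cor D. {T \<in> SYTs D. T c = n})"
    proof
      fix T assume T: "T \<in> SYTs D"
      have Tpi: "T \<in> D \<rightarrow>\<^sub>E {1..n}" and Tb: "bij_betw T D {1..n}"
        and Th: "\<forall>i j. (i, Suc j) \<in> D \<and> (i, j) \<in> D \<longrightarrow> T (i, j) < T (i, Suc j)"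
        and Tv: "\<forall>i j. (Suc i, j) \<in> D \<and> (i, j) \<in> D \<longrightarrow> T (i, j) < T (Suc i, j)"
        using T by (auto simp: SYTs_def n_def)
      have "n \<in> T ` D" using Tb n1 by (auto simp: bij_betw_def)
      then obtain c where c: "c \<in> D" "T c = n" by blast
      have "c \<in> Cor D"
      proof -
        obtain i j where ij: "c = (i, j)" by fastforce
        have "(i, Suc j) \<notin> D"
        proof
          assume "(i, Suc j) \<in> D"
          then have "T (i, j) < T (i, Suc j)" "T (i, Suc j) \<le> n" using Th c ij Tpi by auto
          then show False using c ij by simp
        qed
        moreover have "(Suc i, j) \<notin> D"
        proof
          assume "(Suc i, j) \<in> D"
          then have "T (i, j) < T (Suc i, j)" "T (Suc i, j) \<le> n" using Tv c ij Tpi by auto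
          then show False using c ij by simp
        qed
        ultimately show ?thesis using c ij by (simp add: Cor_def)
      qed
      then show "T \<in> (\<Union>c\<in>Cor D. {T \<in> SYTs D. T c = n})" using T c by blast
    qed
  qed auto
  then have "card (SYTs D) = card (\<Union>c\<in>Cor D. {T \<in> SYTs D. T c = n})" by simp
  also have "\<dots> = (\<Sum>c\<in>Cor D. card {T \<in> SYTs D. T c = n})"
  proof (rule card_UN_disjoint)
    show "finite (Cor D)" using fin by (simp add: Cor_def)
    show "\<forall>i\<in>Cor D. finite {T \<in> SYTs D. T i = n}" using SYTs_finite[OF fin] by simp
    show "\<forall>i\<in>Cor D. \<forall>j\<in>Cor D. i \<noteq> j \<longrightarrow> {T \<in> SYTs D. T i = n} \<inter> {T \<in> SYTs D. T j = n} = {}"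
    proof (intro ballI impI)
      fix a b assume ab: "a \<in> Cor D" "b \<in> Cor D" "a \<noteq> b"
      show "{T \<in> SYTs D. T a = n} \<inter> {T \<in> SYTs D. T b = n} = {}"
      proof (rule ccontr)
        assume "\<not> ?thesis"
        then obtain T where "T \<in> SYTs D" "T a = n" "T b = n" by blast
        then have "inj_on T D" by (auto simp: SYTs_def bij_betw_def)
        then show False using ab \<open>T a = n\<close> \<open>T b = n\<close> by (auto simp: Cor_def inj_on_def)
      qed
    qed
  qed
  also have "\<dots> = (\<Sum>c\<in>Cor D. card (SYTs (D - {c})))"
    using SYTs_fix_card[OF fin] n_def by simp
  finally show ?thesis .
qed

lemma down_closed_SYT:
  "(\<And>i j. (i, Suc j) \<in> D \<Longrightarrow> (i, j) \<in> D) \<Longrightarrow> (\<And>i j. (Suc i, j) \<in> D \<Longrightarrow> (i, j) \<in> D) \<Longrightarrow>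
   SYTs D = {T. T \<in> D \<rightarrow>\<^sub>E {1..card D} \<and> bij_betw T D {1..card D}
      \<and> (\<forall>i j. (i, Suc j) \<in> D \<longrightarrow> T (i, j) < T (i, Suc j))
      \<and> (\<forall>i j. (Suc i, j) \<in> D \<longrightarrow> T (i, j) < T (Suc i, j))}"
  unfolding SYTs_def by blast

definition rk :: "nat set \<Rightarrow> nat \<Rightarrow> nat" where "rk X x = card {y\<in>X. x < y}"
definition cb :: "nat set \<Rightarrow> nat \<Rightarrow> nat" where "cb X x = card {y\<in>X. y < x}"
definition cellsB :: "nat set \<Rightarrow> (nat \<times> nat) set" where
  "cellsB X = {(i, j). \<exists>x\<in>X. i = rk X x \<and> j + cb X x < x}"

lemma rk_cb: assumes "finite X" "x \<in> X" shows "rk X x + cb X x + 1 = card X"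
proof -
  have "X = insert x ({y\<in>X. x < y} \<union> {y\<in>X. y < x})" using assms by auto
  then have "card X = card (insert x ({y\<in>X. x < y} \<union> {y\<in>X. y < x}))" by simp
  also have "\<dots> = Suc (card ({y\<in>X. x < y} \<union> {y\<in>X. y < x}))"
    using assms by (intro card_insert_disjoint) auto
  also have "card ({y\<in>X. x < y} \<union> {y\<in>X. y < x}) = card {y\<in>X. x < y} + card {y\<in>X. y < x}"
    using assms by (intro card_Un_disjoint) auto
  finally show ?thesis by (simp add: rk_def cb_def)
qed

lemma cb_le: "cb X x \<le> x"
proof -
  have "{y\<in>X. y < x} \<subseteq> {..<x}" by auto
  then show ?thesis unfolding cb_def by (metis card_lessThan card_mono finite_lessThan)
qed

lemma cb_le': assumes "x - 1 \<notin> X" "0 < x" shows "cb X x \<le> x - 1"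
proof -
  have "{y\<in>X. y < x} \<subseteq> {..<x} - {x - 1}" using assms by auto
  moreover have "card ({..<x} - {x - 1}) = x - 1" using assms by simp
  ultimately show ?thesis unfolding cb_def by (metis card_mono finite_Diff finite_lessThan)
qed

lemma cb_mono: assumes "finite X" "x \<in> X" "x < y" shows "cb X x < cb X y"
proof -
  have "{z\<in>X. z < x} \<subset> {z\<in>X. z < y}" using assms by auto
  then show ?thesis unfolding cb_def using assms by (intro psubset_card_mono) auto
qed

lemma rk_anti: assumes "finite X" "y \<in> X" "x < y" shows "rk X y < rk X x"
proof -
  have "{z\<in>X. y < z} \<subset> {z\<in>X. x < z}" using assms by auto
  then show ?thesis unfolding rk_def using assms by (intro psubset_card_mono) auto
qed

lemma rk_inj: assumes "finite X" "x \<in> X" "y \<in> X" "rk X x = rk X y" shows "x = y"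
  using rk_anti[OF assms(1) assms(2), of y] rk_anti[OF assms(1) assms(3), of x] assms(4)
  by (metis less_irrefl nat_neq_iff)

lemma rk_lt_imp: assumes "finite X" "x \<in> X" "y \<in> X" "rk X x < rk X y" shows "y < x"
  using rk_anti[OF assms(1) assms(2), of y] rk_anti[OF assms(1) assms(3), of x] assms(4)
  by (metis less_asym nat_neq_iff)

lemma sum_lessThan_choose2: "(\<Sum>i<k. i) = k choose 2"
proof (induction k)
  case 0 then show ?case by simp
next
  case (Suc k)
  have "Suc k choose 2 = Suc k choose Suc 1" by (simp add: numeral_2_eq_2)
  also have "\<dots> = (k choose 1) + (k choose Suc 1)" by simp
  finally show ?case using Suc by (simp add: numeral_2_eq_2)
qed

lemma sum_cb: assumes "finite X" shows "(\<Sum>x\<in>X. cb X x) = card X choose 2"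
proof -
  have inj: "inj_on (cb X) X"
    by (rule inj_onI) (metis assms cb_mono less_irrefl nat_neq_iff)
  have sub: "cb X ` X \<subseteq> {..<card X}"
    using rk_cb[OF assms] by fastforce
  have "card (cb X ` X) = card X" using card_image[OF inj] .
  then have "cb X ` X = {..<card X}"
    using sub by (metis card_lessThan card_subset_eq finite_lessThan)
  then have "(\<Sum>x\<in>X. cb X x) = (\<Sum>i<card X. i)"
    using sum.reindex[OF inj, of id] by simp
  then show ?thesis by (simp add: sum_lessThan_choose2)
qed

lemma card_cellsB: assumes "finite X" shows "card (cellsB X) + (card X choose 2) = \<Sum>X"
proof -
  have eq: "cellsB X = (\<Union>x\<in>X. {rk X x} \<times> {..< x - cb X x})"
    unfolding cellsB_def by auto
  have "card (cellsB X) = (\<Sum>x\<in>X. card ({rk X x} \<times> {..< x - cb X x}))"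
    unfolding eq
  proof (rule card_UN_disjoint)
    show "finite X" by fact
    show "\<forall>i\<in>X. finite ({rk X i} \<times> {..<i - cb X i})" by simp
    show "\<forall>i\<in>X. \<forall>j\<in>X. i \<noteq> j \<longrightarrow> {rk X i} \<times> {..<i - cb X i} \<inter> {rk X j} \<times> {..<j - cb X j} = {}"
      using rk_inj[OF assms] by blast
  qed
  also have "\<dots> = (\<Sum>x\<in>X. x - cb X x)" by (simp add: card_cartesian_product)
  also have "\<dots> = \<Sum>X - (\<Sum>x\<in>X. cb X x)"
    by (rule sum_subtractf_nat) (simp add: cb_le)
  finally show ?thesis using sum_cb[OF assms]
    by (metis add_diff_inverse_nat cb_le diff_is_0_eq' nat_le_linear sum_mono zero_less_diff
        add.commute le_add_diff_inverse)
qed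

lemma finite_cellsB: "finite X \<Longrightarrow> finite (cellsB X)"
proof -
  assume f: "finite X"
  have "cellsB X = (\<Union>x\<in>X. {rk X x} \<times> {..< x - cb X x})"
    unfolding cellsB_def by auto
  then show ?thesis using f by simp
qed

lemma rk_cb_mono_map:
  assumes "finite X" "\<And>u z. u \<in> X \<Longrightarrow> z \<in> X \<Longrightarrow> (u < z \<longleftrightarrow> f u < f z)" "u \<in> X"
  shows "rk (f ` X) (f u) = rk X u" "cb (f ` X) (f u) = cb X u"
proof -
  have inj: "inj_on f X"
    by (rule inj_onI) (metis assms(2) less_irrefl nat_neq_iff)
  have "{z\<in>f ` X. f u < z} = f ` {z\<in>X. u < z}" using assms by auto
  then show "rk (f ` X) (f u) = rk X u" unfolding rk_def
    by (metis (no_types, lifting) card_image inj inj_on_subset mem_Collect_eq subsetI)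
  have "{z\<in>f ` X. z < f u} = f ` {z\<in>X. z < u}" using assms by auto
  then show "cb (f ` X) (f u) = cb X u" unfolding cb_def
    by (metis (no_types, lifting) card_image inj inj_on_subset mem_Collect_eq subsetI)
qed

definition mv :: "nat \<Rightarrow> nat \<Rightarrow> nat" where
  "mv x z = (if z = x then x - 1 else z)"

lemma mv_mono:
  assumes "x - 1 \<notin> X" "0 < x" "u \<in> X" "z \<in> X"
  shows "u < z \<longleftrightarrow> mv x u < mv x z"
proof -
  have "u \<noteq> x - 1" "z \<noteq> x - 1" using assms by auto
  then show ?thesis using assms unfolding mv_def by (cases "u = x"; cases "z = x") auto
qed

lemma mv_image: assumes "x \<in> X" shows "mv x ` X = insert (x - 1) (X - {x})"
  using assms unfolding mv_def by auto

lemma cellsB_move: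
  assumes fin: "finite X" and x: "x \<in> X" "0 < x" "x - 1 \<notin> X"
  shows "cellsB (insert (x - 1) (X - {x})) = cellsB X - {(rk X x, x - 1 - cb X x)}"
    and "(rk X x, x - 1 - cb X x) \<in> cellsB X"
proof -
  let ?X' = "insert (x - 1) (X - {x})"
  have X': "?X' = mv x ` X" using mv_image[OF x(1)] by simp
  have rk': "\<And>u. u \<in> X \<Longrightarrow> rk ?X' (mv x u) = rk X u"
    using rk_cb_mono_map(1)[OF fin mv_mono[OF x(3) x(2)]] X' by metis
  have cb': "\<And>u. u \<in> X \<Longrightarrow> cb ?X' (mv x u) = cb X u"
    using rk_cb_mono_map(2)[OF fin mv_mono[OF x(3) x(2)]] X' by metis
  have cbx: "cb X x \<le> x - 1" using cb_le'[OF x(3) x(2)] .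
  have "cellsB ?X' = {(i, j). \<exists>u\<in>X. i = rk X u \<and> j + cb X u < mv x u}"
  proof (intro set_eqI iffI)
    fix c assume "c \<in> cellsB ?X'"
    then obtain i j w where c: "c = (i, j)" "w \<in> ?X'" "i = rk ?X' w" "j + cb ?X' w < w"
      unfolding cellsB_def by blast
    then obtain u where u: "u \<in> X" "w = mv x u" using X' by blast
    then show "c \<in> {(i, j). \<exists>u\<in>X. i = rk X u \<and> j + cb X u < mv x u}"
      using c rk'[OF u(1)] cb'[OF u(1)] by auto
  next
    fix c assume "c \<in> {(i, j). \<exists>u\<in>X. i = rk X u \<and> j + cb X u < mv x u}"
    then obtain i j u where c: "c = (i, j)" "u \<in> X" "i = rk X u" "j + cb X u < mv x u" by blast
    have "mv x u \<in> ?X'" using X' c(2) by blast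
    moreover have "rk ?X' (mv x u) = i" "j + cb ?X' (mv x u) < mv x u" using c rk'[OF c(2)] cb'[OF c(2)] by auto
    ultimately show "c \<in> cellsB ?X'" unfolding cellsB_def using c(1) by blast
  qed
  also have "\<dots> = cellsB X - {(rk X x, x - 1 - cb X x)}"
  proof (intro set_eqI iffI)
    fix c assume "c \<in> {(i, j). \<exists>u\<in>X. i = rk X u \<and> j + cb X u < mv x u}"
    then obtain i j u where c: "c = (i, j)" "u \<in> X" "i = rk X u" "j + cb X u < mv x u" by blast
    show "c \<in> cellsB X - {(rk X x, x - 1 - cb X x)}"
    proof (cases "u = x")
      case True
      then show ?thesis using c cbx unfolding cellsB_def mv_def by auto
    next
      case False
      then have "rk X u \<noteq> rk X x" using rk_inj[OF fin c(2) x(1)] by blast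
      then show ?thesis using c False unfolding cellsB_def mv_def by auto
    qed
  next
    fix c assume "c \<in> cellsB X - {(rk X x, x - 1 - cb X x)}"
    then obtain i j u where c: "c = (i, j)" "u \<in> X" "i = rk X u" "j + cb X u < u"
      and ne: "c \<noteq> (rk X x, x - 1 - cb X x)" unfolding cellsB_def by blast
    show "c \<in> {(i, j). \<exists>u\<in>X. i = rk X u \<and> j + cb X u < mv x u}"
    proof (cases "u = x")
      case True
      then have "j + cb X u < x - 1" using c ne by auto
      then show ?thesis using c True unfolding mv_def by auto
    next
      case False
      then show ?thesis using c unfolding mv_def by auto
    qed
  qed
  finally show "cellsB ?X' = cellsB X - {(rk X x, x - 1 - cb X x)}" .
  show "(rk X x, x - 1 - cb X x) \<in> cellsB X"
    unfolding cellsB_def using x cbx by auto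
qed

lemma rk_pred: assumes "finite X" "u \<in> X" "u - 1 \<in> X" "0 < u"
  shows "rk X (u - 1) = Suc (rk X u)" "cb X u = Suc (cb X (u - 1))"
proof -
  have "{z\<in>X. u - 1 < z} = insert u {z\<in>X. u < z}" using assms by auto
  then show "rk X (u - 1) = Suc (rk X u)" unfolding rk_def using assms by simp
  have "{z\<in>X. z < u} = insert (u - 1) {z\<in>X. z < u - 1}" using assms by auto
  then show "cb X u = Suc (cb X (u - 1))" unfolding cb_def using assms by simp
qed

definition Vld :: "nat set \<Rightarrow> nat set" where "Vld X = {x\<in>X. 0 < x \<and> x - 1 \<notin> X}"

lemma Cor_cellsB:
  assumes fin: "finite X"
  shows "bij_betw (\<lambda>x. (rk X x, x - 1 - cb X x)) (Vld X) (Cor (cellsB X))"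
proof -
  let ?k = "\<lambda>x. (rk X x, x - 1 - cb X x)"
  have "inj_on ?k (Vld X)" using rk_inj[OF fin] by (auto simp: inj_on_def Vld_def)
  moreover have "?k ` Vld X = Cor (cellsB X)"
  proof
    show "?k ` Vld X \<subseteq> Cor (cellsB X)"
    proof
      fix c assume "c \<in> ?k ` Vld X"
      then obtain x where x: "x \<in> X" "0 < x" "x - 1 \<notin> X" and c: "c = ?k x" by (auto simp: Vld_def)
      have cbx: "cb X x \<le> x - 1" using cb_le'[OF x(3) x(2)] .
      have inc: "c \<in> cellsB X" using cellsB_move(2)[OF fin x] c by simp
      have r: "(rk X x, Suc (x - 1 - cb X x)) \<notin> cellsB X"
      proof
        assume "(rk X x, Suc (x - 1 - cb X x)) \<in> cellsB X"
        then obtain u where "u \<in> X" "rk X x = rk X u" "Suc (x - 1 - cb X x) + cb X u < u"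
          unfolding cellsB_def by blast
        then show False using rk_inj[OF fin x(1)] cbx by fastforce
      qed
      have d: "(Suc (rk X x), x - 1 - cb X x) \<notin> cellsB X"
      proof
        assume "(Suc (rk X x), x - 1 - cb X x) \<in> cellsB X"
        then obtain u where u: "u \<in> X" "Suc (rk X x) = rk X u" "x - 1 - cb X x + cb X u < u"
          unfolding cellsB_def by blast
        have "u < x" using rk_lt_imp[OF fin x(1) u(1)] u(2) by simp
        then have "u \<le> x - 2" using x(3) u(1) by (cases "u = x - 1") auto
        have "cb X x = Suc (cb X u)" using rk_cb[OF fin x(1)] rk_cb[OF fin u(1)] u(2) by simp
        then show False using u(3) \<open>u \<le> x - 2\<close> cbx by linarith
      qed
      show "c \<in> Cor (cellsB X)" using inc r d c by (simp add: Cor_def)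
    qed
    show "Cor (cellsB X) \<subseteq> ?k ` Vld X"
    proof
      fix c assume c: "c \<in> Cor (cellsB X)"
      then obtain i j u where ij: "c = (i, j)" "u \<in> X" "i = rk X u" "j + cb X u < u"
        unfolding Cor_def cellsB_def by blast
      have nr: "(i, Suc j) \<notin> cellsB X" and nd: "(Suc i, j) \<notin> cellsB X" using c ij by (auto simp: Cor_def)
      have "\<not> (Suc j + cb X u < u)" using nr ij unfolding cellsB_def by blast
      then have j: "j = u - 1 - cb X u" using ij by linarith
      have u0: "0 < u" using ij by linarith
      have "u - 1 \<notin> X"
      proof
        assume w: "u - 1 \<in> X"
        have "rk X (u - 1) = Suc i" "cb X u = Suc (cb X (u - 1))" using rk_pred[OF fin ij(2) w u0] ij by auto
        then have "(Suc i, j) \<in> cellsB X" unfolding cellsB_def using w j ij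
          by (auto intro!: bexI[of _ "u - 1"])
        then show False using nd by simp
      qed
      then show "c \<in> ?k ` Vld X" using ij j u0 by (auto simp: Vld_def)
    qed
  qed
  ultimately show ?thesis by (simp add: bij_betw_def)
qed

lemma cellsB_shift: assumes "finite X" shows "cellsB (insert 0 (Suc ` X)) = cellsB X"
proof -
  let ?X' = "insert 0 (Suc ` X)"
  have rkS: "\<And>u. u \<in> X \<Longrightarrow> rk ?X' (Suc u) = rk X u"
  proof -
    fix u assume u: "u \<in> X"
    have "{z\<in>?X'. Suc u < z} = Suc ` {z\<in>X. u < z}" by auto
    then show "rk ?X' (Suc u) = rk X u" unfolding rk_def by (simp add: card_image)
  qed
  have cbS: "\<And>u. u \<in> X \<Longrightarrow> cb ?X' (Suc u) = Suc (cb X u)"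
  proof -
    fix u assume u: "u \<in> X"
    have "{z\<in>?X'. z < Suc u} = insert 0 (Suc ` {z\<in>X. z < u})" by auto
    then show "cb ?X' (Suc u) = Suc (cb X u)" unfolding cb_def
      using assms by (simp add: card_image card_insert_if)
  qed
  show ?thesis
  proof (intro set_eqI iffI)
    fix c assume "c \<in> cellsB ?X'"
    then obtain i j w where c: "c = (i, j)" "w \<in> ?X'" "i = rk ?X' w" "j + cb ?X' w < w"
      unfolding cellsB_def by blast
    then obtain u where "w = Suc u" "u \<in> X" by auto
    then show "c \<in> cellsB X" using c rkS cbS unfolding cellsB_def by auto
  next
    fix c assume "c \<in> cellsB X"
    then obtain i j u where c: "c = (i, j)" "u \<in> X" "i = rk X u" "j + cb X u < u"
      unfolding cellsB_def by blast
    have "Suc u \<in> ?X'" using c by simp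
    moreover have "rk ?X' (Suc u) = i" "j + cb ?X' (Suc u) < Suc u" using c rkS[OF c(2)] cbS[OF c(2)] by auto
    ultimately show "c \<in> cellsB ?X'" unfolding cellsB_def using c(1) by blast
  qed
qed

definition Dl :: "nat set \<Rightarrow> real" where
  "Dl X = (\<Prod>x\<in>X. \<Prod>y\<in>{y\<in>X. y < x}. (real x - real y))"
definition PF :: "nat set \<Rightarrow> real" where
  "PF X = (\<Prod>x\<in>X. fact x)"
definition FF :: "nat set \<Rightarrow> real" where
  "FF X = fact (card (cellsB X)) * Dl X / PF X"

lemma PF_pos: "PF X > 0" unfolding PF_def by (simp add: prod_pos)

lemma Dl_insert:
  assumes "finite X" "a \<notin> X"
  shows "Dl (insert a X) = Dl X * (\<Prod>y\<in>X. \<bar>real a - real y\<bar>)"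
proof -
  have "Dl (insert a X) = (\<Prod>y\<in>{y\<in>insert a X. y < a}. (real a - real y)) *
          (\<Prod>x\<in>X. \<Prod>y\<in>{y\<in>insert a X. y < x}. (real x - real y))"
    unfolding Dl_def using assms by simp
  also have "{y\<in>insert a X. y < a} = {y\<in>X. y < a}" by auto
  also have "(\<Prod>x\<in>X. \<Prod>y\<in>{y\<in>insert a X. y < x}. (real x - real y))
      = (\<Prod>x\<in>X. (if a < x then real x - real a else 1) * (\<Prod>y\<in>{y\<in>X. y < x}. (real x - real y)))"
  proof (rule prod.cong[OF refl])
    fix x assume x: "x \<in> X"
    show "(\<Prod>y\<in>{y\<in>insert a X. y < x}. (real x - real y)) =
          (if a < x then real x - real a else 1) * (\<Prod>y\<in>{y\<in>X. y < x}. (real x - real y))"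
    proof (cases "a < x")
      case True
      then have "{y\<in>insert a X. y < x} = insert a {y\<in>X. y < x}" by auto
      then show ?thesis using True assms by simp
    next
      case False
      then have "{y\<in>insert a X. y < x} = {y\<in>X. y < x}" by auto
      then show ?thesis using False by simp
    qed
  qed
  also have "\<dots> = (\<Prod>x\<in>X. (if a < x then real x - real a else 1)) * Dl X"
    unfolding Dl_def by (simp add: prod.distrib)
  finally have L: "Dl (insert a X) = (\<Prod>y\<in>{y\<in>X. y < a}. (real a - real y)) *
     ((\<Prod>x\<in>X. (if a < x then real x - real a else 1)) * Dl X)" .
  have "(\<Prod>y\<in>X. \<bar>real a - real y\<bar>) =
       (\<Prod>y\<in>X. (if y < a then real a - real y else 1) * (if a < y then real y - real a else 1))"
    by (rule prod.cong[OF refl]) (use assms in auto)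
  also have "\<dots> = (\<Prod>y\<in>{y\<in>X. y < a}. (real a - real y)) * (\<Prod>x\<in>X. (if a < x then real x - real a else 1))"
    by (simp add: prod.distrib prod.inter_filter[OF assms(1)])
  finally show ?thesis using L by (simp add: mult_ac)
qed

lemma PF_insert: "finite X \<Longrightarrow> a \<notin> X \<Longrightarrow> PF (insert a X) = fact a * PF X"
  unfolding PF_def by simp

lemma down_closed_set:
  assumes fin: "finite X" and dc: "\<forall>x\<in>X. 0 < x \<longrightarrow> x - 1 \<in> X"
  shows "X = {..<card X}"
proof -
  have dc2: "\<And>x d. x \<in> X \<Longrightarrow> x - d \<in> X"
  proof -
    fix x d assume "x \<in> X"
    then show "x - d \<in> X"
    proof (induction d)
      case 0 then show ?case by simp
    next
      case (Suc d)
      then have "x - d \<in> X" by simp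
      then show ?case using dc by (cases "x - d = 0") (auto simp: diff_Suc split: nat.splits)
    qed
  qed
  have sub: "X \<subseteq> {..<card X}"
  proof
    fix x assume x: "x \<in> X"
    have "{..x} \<subseteq> X"
    proof
      fix y assume "y \<in> {..x}"
      then have "y = x - (x - y)" by simp
      then show "y \<in> X" using dc2[OF x, of "x - y"] by simp
    qed
    then have "card {..x} \<le> card X" by (rule card_mono[OF fin])
    then show "x \<in> {..<card X}" by simp
  qed
  then show ?thesis by (metis card_lessThan card_subset_eq finite_lessThan)
qed

lemma Dl_initial: "Dl {..<k} = PF {..<k}"
proof (induction k)
  case 0 then show ?case by (simp add: Dl_def PF_def)
next
  case (Suc k)
  have "Dl {..<Suc k} = Dl {..<k} * (\<Prod>y<k. \<bar>real k - real y\<bar>)"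
    using Dl_insert[of "{..<k}" k] by (simp add: lessThan_Suc)
  also have "(\<Prod>y<k. \<bar>real k - real y\<bar>) = (\<Prod>y<k. real (k - y))"
    by (rule prod.cong) auto
  also have "\<dots> = fact k" by (simp add: fact_prod_rev atLeast0LessThan)
  finally show ?case using Suc PF_insert[of "{..<k}" k] by (simp add: lessThan_Suc mult.commute)
qed

lemma FF_move:
  assumes fin: "finite X" and x: "x \<in> X" "0 < x" "x - 1 \<notin> X" and n: "card (cellsB X) = n"
  shows "FF (insert (x - 1) (X - {x})) =
     FF X * (real x / real n) * (\<Prod>y\<in>X - {x}. (real x - 1 - real y) / (real x - real y))"
proof -
  let ?A = "X - {x}"
  have finA: "finite ?A" using fin by simp
  have X: "X = insert x ?A" using x by auto
  have cm: "cellsB (insert (x - 1) ?A) = cellsB X - {(rk X x, x - 1 - cb X x)}"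
    and cin: "(rk X x, x - 1 - cb X x) \<in> cellsB X" using cellsB_move[OF fin x] by auto
  have n1: "n \<ge> 1" using cin finite_cellsB[OF fin] n by (metis card_0_eq empty_iff less_one not_le)
  have cn: "card (cellsB (insert (x - 1) ?A)) = n - 1"
    using cm cin finite_cellsB[OF fin] n by simp
  have nA: "x - 1 \<notin> ?A" "x \<notin> ?A" using x by auto
  have DX: "Dl X = Dl ?A * (\<Prod>y\<in>?A. \<bar>real x - real y\<bar>)"
    using Dl_insert[OF finA nA(2)] X by simp
  have DX': "Dl (insert (x - 1) ?A) = Dl ?A * (\<Prod>y\<in>?A. \<bar>real x - 1 - real y\<bar>)"
    using Dl_insert[OF finA nA(1)] x by (simp add: of_nat_diff)
  have PX: "PF X = fact x * PF ?A" using PF_insert[OF finA nA(2)] X by simp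
  have PX': "PF (insert (x - 1) ?A) = fact (x - 1) * PF ?A" using PF_insert[OF finA nA(1)] by simp
  have absq: "(\<Prod>y\<in>?A. \<bar>real x - 1 - real y\<bar>) =
      (\<Prod>y\<in>?A. \<bar>real x - real y\<bar>) * (\<Prod>y\<in>?A. (real x - 1 - real y) / (real x - real y))"
  proof -
    have "(\<Prod>y\<in>?A. \<bar>real x - 1 - real y\<bar>) = (\<Prod>y\<in>?A. \<bar>real x - real y\<bar> * ((real x - 1 - real y) / (real x - real y)))"
    proof (rule prod.cong[OF refl])
      fix y assume y: "y \<in> ?A"
      then have "y \<noteq> x" "y \<noteq> x - 1" using x by auto
      then have "y < x - 1 \<or> x < y" by linarith
      then show "\<bar>real x - 1 - real y\<bar> = \<bar>real x - real y\<bar> * ((real x - 1 - real y) / (real x - real y))"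
      proof
        assume "y < x - 1"
        then have "real y + 1 < real x" using x by linarith
        then show ?thesis by simp
      next
        assume "x < y"
        then have "real x < real y" by simp
        then show ?thesis by (simp add: abs_if divide_simps) (simp add: algebra_simps)
      qed
    qed
    then show ?thesis by (simp only: prod.distrib)
  qed
  have fn: "(fact n :: real) = real n * fact (n - 1)" using n1 by (metis Suc_diff_1 fact_Suc less_le_trans zero_less_one of_nat_mult)
  have fx: "(fact x :: real) = real x * fact (x - 1)" using x by (metis Suc_diff_1 fact_Suc of_nat_mult)
  have "FF (insert (x - 1) ?A) = fact (n - 1) * (Dl ?A * ((\<Prod>y\<in>?A. \<bar>real x - real y\<bar>) *
      (\<Prod>y\<in>?A. (real x - 1 - real y) / (real x - real y)))) / (fact (x - 1) * PF ?A)"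
    unfolding FF_def cn DX' PX' absq ..
  also have "\<dots> = FF X * (real x / real n) * (\<Prod>y\<in>?A. (real x - 1 - real y) / (real x - real y))"
    unfolding FF_def n DX PX fn fx using n1 x PF_pos[of ?A] by (simp add: field_simps)
  finally show ?thesis .
qed

lemma hook_formula:
  "finite X \<Longrightarrow> card (cellsB X) = n \<Longrightarrow> real (card (SYTs (cellsB X))) = FF X"
proof (induction n arbitrary: X rule: less_induct)
  case (less n X)
  note fin = less.prems(1)
  show ?case
  proof (cases "cellsB X = {}")
    case True
    then have "Vld X = {}" using Cor_cellsB[OF fin] by (simp add: Cor_def bij_betw_def)
    then have "\<forall>x\<in>X. 0 < x \<longrightarrow> x - 1 \<in> X" by (auto simp: Vld_def)
    then have "X = {..<card X}" using down_closed_set fin by blast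
    then have "FF X = 1" using True Dl_initial[of "card X"] PF_pos[of X] unfolding FF_def by simp
    then show ?thesis using True SYTs_empty by simp
  next
    case False
    have "0 < card (cellsB X)" using False finite_cellsB[OF fin] by (simp add: card_gt_0_iff)
    then have n1: "n \<ge> 1" using less.prems(2) by simp
    let ?mv = "\<lambda>x. insert (x - 1) (X - {x})"
    let ?G = "\<lambda>x. real x * (\<Prod>y\<in>X - {x}. (real x - 1 - real y) / (real x - real y))"
    have "real (card (SYTs (cellsB X))) = (\<Sum>c\<in>Cor (cellsB X). real (card (SYTs (cellsB X - {c}))))"
      using SYTs_branch[OF finite_cellsB[OF fin] False] by simp
    also have "\<dots> = (\<Sum>x\<in>Vld X. real (card (SYTs (cellsB X - {(rk X x, x - 1 - cb X x)}))))"
      using sum.reindex_bij_betw[OF Cor_cellsB[OF fin], of "\<lambda>c. real (card (SYTs (cellsB X - {c})))"] by simp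
    also have "\<dots> = (\<Sum>x\<in>Vld X. FF (?mv x))"
    proof (rule sum.cong[OF refl])
      fix x assume x: "x \<in> Vld X"
      then have xx: "x \<in> X" "0 < x" "x - 1 \<notin> X" by (auto simp: Vld_def)
      have cm: "cellsB (?mv x) = cellsB X - {(rk X x, x - 1 - cb X x)}"
        and cin: "(rk X x, x - 1 - cb X x) \<in> cellsB X" using cellsB_move[OF fin xx] by auto
      have "card (cellsB (?mv x)) = n - 1" using cm cin finite_cellsB[OF fin] less.prems by simp
      then have "real (card (SYTs (cellsB (?mv x)))) = FF (?mv x)"
        using less.IH[of "n - 1" "?mv x"] n1 fin by simp
      then show "real (card (SYTs (cellsB X - {(rk X x, x - 1 - cb X x)}))) = FF (?mv x)" using cm by simp
    qed
    also have "\<dots> = (\<Sum>x\<in>Vld X. FF X / real n * ?G x)"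
    proof (rule sum.cong[OF refl])
      fix x assume x: "x \<in> Vld X"
      then have xx: "x \<in> X" "0 < x" "x - 1 \<notin> X" by (auto simp: Vld_def)
      show "FF (?mv x) = FF X / real n * ?G x" using FF_move[OF fin xx less.prems(2)] by simp
    qed
    also have "\<dots> = (\<Sum>x\<in>X. FF X / real n * ?G x)"
    proof (rule sum.mono_neutral_left)
      show "finite X" by fact
      show "Vld X \<subseteq> X" by (auto simp: Vld_def)
      show "\<forall>x\<in>X - Vld X. FF X / real n * ?G x = 0"
      proof
        fix x assume x: "x \<in> X - Vld X"
        show "FF X / real n * ?G x = 0"
        proof (cases "x = 0")
          case True then show ?thesis by simp
        next
          case False
          then have "x - 1 \<in> X - {x}" using x by (auto simp: Vld_def)
          moreover have "(real x - 1 - real (x - 1)) / (real x - real (x - 1)) = 0"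
            using False by (simp add: of_nat_diff)
          ultimately have ex: "\<exists>y\<in>X - {x}. (real x - 1 - real y) / (real x - real y) = 0" by blast
          have "(\<Prod>y\<in>X - {x}. (real x - 1 - real y) / (real x - real y)) = 0"
            by (rule prod_zero[OF _ ex]) (simp add: fin)
          then show ?thesis by simp
        qed
      qed
    qed
    also have "\<dots> = FF X / real n * (\<Sum>x\<in>X. ?G x)" by (simp add: sum_distrib_left)
    also have "(\<Sum>x\<in>X. ?G x) = real n"
    proof -
      have inj: "inj_on real X" by (simp add: inj_on_def)
      have "(\<Sum>x\<in>real ` X. x * (\<Prod>y\<in>real ` X - {x}. (x - 1 - y) / (x - y))) = \<Sum>(real ` X) - real (card (real ` X) choose 2)"
        using key_identity[of "real ` X"] fin by simp
      moreover have K2: "(\<Sum>x\<in>real ` X. x * (\<Prod>y\<in>real ` X - {x}. (x - 1 - y) / (x - y))) = (\<Sum>x\<in>X. ?G x)"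
      proof -
        have "(\<Sum>x\<in>real ` X. x * (\<Prod>y\<in>real ` X - {x}. (x - 1 - y) / (x - y)))
            = (\<Sum>x\<in>X. real x * (\<Prod>y\<in>real ` X - {real x}. (real x - 1 - y) / (real x - y)))"
          by (simp add: sum.reindex[OF inj])
        also have "\<dots> = (\<Sum>x\<in>X. ?G x)"
        proof (rule sum.cong[OF refl])
          fix x assume "x \<in> X"
          have "real ` X - {real x} = real ` (X - {x})" by auto
          moreover have "inj_on real (X - {x})" by (simp add: inj_on_def)
          ultimately show "real x * (\<Prod>y\<in>real ` X - {real x}. (real x - 1 - y) / (real x - y)) = ?G x"
            by (simp add: prod.reindex)
        qed
        finally show ?thesis .
      qed
      ultimately have S: "(\<Sum>x\<in>X. ?G x) = \<Sum>(real ` X) - real (card (real ` X) choose 2)" by simp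
      have K3: "\<Sum>(real ` X) = real (\<Sum>X)" by (simp add: sum.reindex[OF inj])
      have K4: "card (real ` X) = card X" by (simp add: card_image[OF inj])
      have e: "real n + real (card X choose 2) = real (\<Sum>X)"
        using card_cellsB[OF fin] less.prems(2) by (metis of_nat_add)
      have "(\<Sum>x\<in>X. ?G x) = real (\<Sum>X) - real (card X choose 2)" using S unfolding K3 K4 .
      then show ?thesis using e by linarith
    qed
    finally show ?thesis using n1 by simp
  qed
qed

definition hh :: "nat list \<Rightarrow> nat \<Rightarrow> nat" where
  "hh lam i = lam ! i + length lam - 1 - i"

lemma H_eq: "H lam = hh lam ` {..<length lam}"
  unfolding H_def hh_def by auto

lemma part_pos: assumes "is_partition lam" "i < length lam" shows "lam ! i \<ge> 1"
proof -
  have "lam ! i \<in> set lam" using assms(2) by (rule nth_mem)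
  then have "0 < lam ! i" using assms(1) unfolding is_partition_def by blast
  then show ?thesis by simp
qed

lemma part_mono: "is_partition lam \<Longrightarrow> i < j \<Longrightarrow> j < length lam \<Longrightarrow> lam ! j \<le> lam ! i"
  unfolding is_partition_def using sorted_wrt_nth_less by fastforce

lemma hh_eq: "is_partition lam \<Longrightarrow> i < length lam \<Longrightarrow> hh lam i = lam ! i + (length lam - 1 - i)"
  unfolding hh_def using part_pos[of lam i] by simp

lemma hh_strict: assumes "is_partition lam" "i < j" "j < length lam" shows "hh lam j < hh lam i"
  using hh_eq[OF assms(1)] part_mono[OF assms] assms by simp

lemma hh_less_iff: assumes "is_partition lam" "i < length lam" "j < length lam"
  shows "hh lam i < hh lam j \<longleftrightarrow> j < i"
  using hh_strict[OF assms(1)] assms by (metis less_asym nat_neq_iff)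

lemma hh_inj: "is_partition lam \<Longrightarrow> inj_on (hh lam) {..<length lam}"
  by (rule inj_onI) (metis hh_strict lessThan_iff nat_neq_iff)

lemma card_H: "is_partition lam \<Longrightarrow> card (H lam) = length lam"
  by (simp add: H_eq card_image hh_inj)

lemma finite_H: "finite (H lam)" by (simp add: H_eq)

lemma zero_notin_H: "is_partition lam \<Longrightarrow> 0 \<notin> H lam"
  using part_pos hh_eq by (fastforce simp: H_eq)

lemma rk_H: assumes "is_partition lam" "i < length lam"
  shows "rk (H lam) (hh lam i) = i"
proof -
  have "{z\<in>H lam. hh lam i < z} = hh lam ` {..<i}"
    using hh_less_iff[OF assms(1) assms(2)] assms(2) by (auto simp: H_eq)
  moreover have "inj_on (hh lam) {..<i}" using hh_inj[OF assms(1)]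
    by (rule inj_on_subset) (use assms(2) in auto)
  ultimately show ?thesis unfolding rk_def by (simp add: card_image)
qed

lemma cb_H: assumes "is_partition lam" "i < length lam"
  shows "cb (H lam) (hh lam i) = length lam - 1 - i"
proof -
  have "{z\<in>H lam. z < hh lam i} = hh lam ` {i<..<length lam}"
    using hh_less_iff[OF assms(1) _ assms(2)] by (auto simp: H_eq)
  moreover have "inj_on (hh lam) {i<..<length lam}" using hh_inj[OF assms(1)]
    by (rule inj_on_subset) auto
  ultimately show ?thesis unfolding cb_def by (simp add: card_image)
qed

lemma cells_eq: assumes "is_partition lam" shows "cells lam = cellsB (H lam)"
proof (intro set_eqI iffI)
  fix c assume "c \<in> cells lam"
  then obtain i j where c: "c = (i, j)" "i < length lam" "j < lam ! i" by (auto simp: cells_def)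
  have "hh lam i \<in> H lam" using c by (auto simp: H_eq)
  moreover have "i = rk (H lam) (hh lam i)" using rk_H[OF assms c(2)] by simp
  moreover have "j + cb (H lam) (hh lam i) < hh lam i"
    using cb_H[OF assms c(2)] hh_eq[OF assms c(2)] c by simp
  ultimately show "c \<in> cellsB (H lam)" unfolding cellsB_def using c(1) by blast
next
  fix c assume "c \<in> cellsB (H lam)"
  then obtain i j x where c: "c = (i, j)" "x \<in> H lam" "i = rk (H lam) x" "j + cb (H lam) x < x"
    unfolding cellsB_def by blast
  then obtain i' where i': "i' < length lam" "x = hh lam i'" by (auto simp: H_eq)
  then have "i = i'" using rk_H[OF assms i'(1)] c by simp
  then show "c \<in> cells lam" using c i' cb_H[OF assms i'(1)] hh_eq[OF assms i'(1)]
    by (auto simp: cells_def)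
qed

lemma card_cells: "card (cells lam) = sum_list lam"
proof -
  have "cells lam = (\<Union>i<length lam. {i} \<times> {..<lam ! i})" by (auto simp: cells_def)
  then have "card (cells lam) = (\<Sum>i<length lam. card ({i} \<times> {..<lam ! i}))"
    by (simp only:) (rule card_UN_disjoint, auto)
  also have "\<dots> = (\<Sum>i<length lam. lam ! i)" by (simp add: card_cartesian_product)
  finally show ?thesis by (simp add: sum_list_sum_nth atLeast0LessThan)
qed

lemma SYT_eq: assumes "is_partition lam" shows "SYT lam = SYTs (cells lam)"
proof -
  have d1: "\<And>i j. (i, Suc j) \<in> cells lam \<Longrightarrow> (i, j) \<in> cells lam" by (auto simp: cells_def)
  have d2: "\<And>i j. (Suc i, j) \<in> cells lam \<Longrightarrow> (i, j) \<in> cells lam"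
  proof -
    fix i j assume "(Suc i, j) \<in> cells lam"
    then have "Suc i < length lam" "j < lam ! Suc i" by (auto simp: cells_def)
    moreover have "lam ! Suc i \<le> lam ! i" using part_mono[OF assms, of i "Suc i"] calculation by simp
    ultimately show "(i, j) \<in> cells lam" by (auto simp: cells_def)
  qed
  show ?thesis unfolding SYT_def using down_closed_SYT[OF d1 d2] card_cells by simp
qed

lemma num_syt_FF: assumes "is_partition lam" shows "real (num_syt lam) = FF (H lam)"
  unfolding num_syt_def SYT_eq[OF assms] cells_eq[OF assms]
  using hook_formula[OF finite_H refl] .

lemma part_unique:
  assumes "is_partition l1" "is_partition l2" "H l1 = H l2" shows "l1 = l2"
proof (rule nth_equalityI)
  show len: "length l1 = length l2" using card_H assms by metis
  fix i assume i: "i < length l1"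
  have i2: "i < length l2" using i len by simp
  have "hh l1 i \<in> H l1" "hh l2 i \<in> H l1" using i i2 assms(3) by (auto simp: H_eq)
  moreover have "rk (H l1) (hh l1 i) = rk (H l1) (hh l2 i)"
    using rk_H[OF assms(1) i] rk_H[OF assms(2) i2] assms(3) by simp
  ultimately have "hh l1 i = hh l2 i" using rk_inj[OF finite_H] by blast
  then show "l1 ! i = l2 ! i" using hh_eq[OF assms(1) i] hh_eq[OF assms(2) i2] len by simp
qed

lemma strict_dec_gap:
  assumes "sorted_wrt (>) d" "i \<le> j" "j < length d" shows "d ! j + (j - i) \<le> d ! i"
  using assms(2,3)
proof (induction j)
  case 0 then show ?case by simp
next
  case (Suc j)
  show ?case
  proof (cases "i = Suc j")
    case True then show ?thesis by simp
  next
    case False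
    then have "i \<le> j" using Suc by simp
    then have "d ! j + (j - i) \<le> d ! i" using Suc by simp
    moreover have "d ! Suc j < d ! j" using sorted_wrt_nth_less[OF assms(1), of j "Suc j"] Suc by simp
    ultimately show ?thesis using \<open>i \<le> j\<close> by simp
  qed
qed

lemma part_exists:
  assumes fin: "finite Y" and z: "0 \<notin> Y"
  shows "\<exists>lam. is_partition lam \<and> H lam = Y"
proof -
  define d where "d = rev (sorted_list_of_set Y)"
  define k where "k = card Y"
  have ld: "length d = k" by (simp add: d_def k_def)
  have sd: "sorted_wrt (>) d" unfolding d_def sorted_wrt_rev
    using strict_sorted_list_of_set[of Y] by simp
  have setd: "set d = Y" using fin by (simp add: d_def)
  have big: "\<And>i. i < k \<Longrightarrow> d ! i \<ge> k - i"
  proof -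
    fix i assume i: "i < k"
    have "d ! (k - 1) \<in> Y" using setd ld i by (metis diff_less less_nat_zero_code neq0_conv nth_mem zero_less_one)
    then have "d ! (k - 1) \<ge> 1" using z by (metis less_one not_le)
    moreover have "d ! (k - 1) + (k - 1 - i) \<le> d ! i" using strict_dec_gap[OF sd, of i "k - 1"] i ld by simp
    ultimately show "d ! i \<ge> k - i" using i by linarith
  qed
  define lam where "lam = map (\<lambda>i. d ! i - (k - 1 - i)) [0..<k]"
  have ll: "length lam = k" by (simp add: lam_def)
  have lnth: "\<And>i. i < k \<Longrightarrow> lam ! i = d ! i - (k - 1 - i)" by (simp add: lam_def)
  have "is_partition lam"
    unfolding is_partition_def
  proof
    have A: "\<And>i j. i < j \<Longrightarrow> j < length lam \<Longrightarrow> lam ! j \<le> lam ! i"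
    proof -
      fix i j assume ij: "i < j" "j < length lam"
      then have "d ! j + (j - i) \<le> d ! i" using strict_dec_gap[OF sd, of i j] ll ld by simp
      then show "lam ! j \<le> lam ! i" using ij ll lnth[of i] lnth[of j] big[of i] big[of j] by simp
    qed
    show "sorted_wrt (\<ge>) lam" unfolding sorted_wrt_iff_nth_less using A by blast
    show "\<forall>x\<in>set lam. 0 < x"
    proof
      fix x assume "x \<in> set lam"
      then obtain i where "i < k" "x = lam ! i" using ll by (metis in_set_conv_nth)
      then show "0 < x" using lnth big by fastforce
    qed
  qed
  moreover have "H lam = Y"
  proof -
    have "H lam = (\<lambda>i. lam ! i + k - 1 - i) ` {..<k}" unfolding H_def ll by auto
    also have "\<dots> = (\<lambda>i. d ! i) ` {..<k}"
    proof (rule image_cong[OF refl])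
      fix i assume "i \<in> {..<k}"
      then have "i < k" by simp
      then show "lam ! i + k - 1 - i = d ! i" using lnth[of i] big[of i] by simp
    qed
    also have "\<dots> = set d" using ld by (auto simp: in_set_conv_nth)
    finally show ?thesis using setd by simp
  qed
  ultimately show ?thesis by blast
qed

lemma part_ex1: "finite Y \<Longrightarrow> 0 \<notin> Y \<Longrightarrow> \<exists>!lam. is_partition lam \<and> H lam = Y"
proof -
  assume a: "finite Y" "0 \<notin> Y"
  obtain lam where lam: "is_partition lam" "H lam = Y" using part_exists[OF a] by blast
  show ?thesis
  proof (rule ex1I[of _ lam])
    show "is_partition lam \<and> H lam = Y" using lam by simp
    fix l assume "is_partition l \<and> H l = Y"
    then show "l = lam" using part_unique[of l lam] lam by simp
  qed
qed

lemma shift_Suc: "shift X (Suc r) = insert 0 (Suc ` shift X r)"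
proof -
  have "Suc ` shift X r = (\<lambda>x. x + Suc r) ` X \<union> Suc ` {0..<r}"
    unfolding shift_def image_Un image_image by simp
  moreover have "{0..<Suc r} = insert 0 (Suc ` {0..<r})" by (rule atLeast0_lessThan_Suc_eq_insert_0)
  ultimately show ?thesis unfolding shift_def by auto
qed

lemma shift_0: "shift X 0 = X" unfolding shift_def by simp

lemma finite_shift: "finite X \<Longrightarrow> finite (shift X r)" unfolding shift_def by simp

lemma cellsB_shift_r: "finite X \<Longrightarrow> cellsB (shift X r) = cellsB X"
  by (induction r) (simp_all add: shift_0 shift_Suc cellsB_shift finite_shift)

lemma ratio:
  assumes fin: "finite X" and z: "0 \<in> X" and N: "\<forall>x\<in>X. x < N"
  shows "FF (insert N (X - {0})) * fact (card (cellsB X)) * fact N * (\<Prod>x\<in>X - {0}. real x)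
       = FF X * fact (card (cellsB X) + N) * (\<Prod>x\<in>X - {0}. real (N - x))"
proof -
  let ?A = "X - {0}" let ?Y = "insert N ?A" let ?n = "card (cellsB X)"
  have finA: "finite ?A" using fin by simp
  have NA: "N \<notin> ?A" using N by auto
  have X: "X = insert 0 ?A" using z by auto
  have "card X \<ge> 1" using fin z by (metis card_0_eq empty_iff less_one not_le)
  then have cY: "card ?Y = card X" using fin z NA by (simp add: card_insert_if card_Diff_singleton)
  have sY: "\<Sum>?Y = \<Sum>X + N" using fin NA z by (simp add: sum.insert sum_diff1_nat)
  have nY: "card (cellsB ?Y) = ?n + N"
    using card_cellsB[OF fin] card_cellsB[of ?Y] finA cY sY by simp
  have DX: "Dl X = Dl ?A * (\<Prod>y\<in>?A. real y)"
    using Dl_insert[OF finA, of 0] X by simp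
  have DY: "Dl ?Y = Dl ?A * (\<Prod>y\<in>?A. real (N - y))"
  proof -
    have "Dl ?Y = Dl ?A * (\<Prod>y\<in>?A. \<bar>real N - real y\<bar>)" using Dl_insert[OF finA NA] .
    also have "(\<Prod>y\<in>?A. \<bar>real N - real y\<bar>) = (\<Prod>y\<in>?A. real (N - y))"
      by (rule prod.cong[OF refl]) (use N in \<open>auto simp: of_nat_diff\<close>)
    finally show ?thesis .
  qed
  have PX: "PF X = PF ?A" using PF_insert[OF finA, of 0] X by simp
  have PY: "PF ?Y = fact N * PF ?A" using PF_insert[OF finA NA] .
  show ?thesis
    unfolding FF_def nY DX DY PX PY using PF_pos[of ?A] by (simp add: field_simps)
qed

lemma Od_fact_shift:
  assumes "R \<ge> 2" "m < 2^(R-1)"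
  shows "Od (fact (2^R + m)) = Od (fact (2^R)) * Od (fact m)"
  using assms(2)
proof (induction m)
  case 0
  have "Od (Suc 0) = 1" by (simp add: Od_def odd_part_def)
  then show ?case by simp
next
  case (Suc m)
  have e: "fact (2^R + Suc m) = (2^R + Suc m) * (fact (2^R + m) :: nat)"
    by (simp only: add_Suc_right fact_Suc of_nat_id)
  have "Od (fact (2^R + Suc m)) = Od (2^R + Suc m) * Od (fact (2^R + m))"
    unfolding e by (rule Od_mult) simp_all
  also have "Od (2^R + Suc m) = Od (Suc m)" using Od_plus[of "Suc m" R] Suc.prems assms(1) by simp
  also have "Od (fact (2^R + m)) = Od (fact (2^R)) * Od (fact m)" using Suc by simp
  also have "Od (fact (Suc m)) = Od (Suc m) * Od (fact m)"
    unfolding fact_Suc of_nat_id by (rule Od_mult) simp_all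
  ultimately show ?case by (simp add: mult_ac)
qed

lemma prod_sign:
  assumes "finite A"
  shows "(\<Prod>x\<in>A. (if x = M then 1 else -1 :: int)) = (-1)^card A * (if M \<in> A then -1 else 1)"
  using assms
proof (induction A rule: finite_induct)
  case empty then show ?case by simp
next
  case (insert a A)
  then show ?case by (cases "a = M") auto
qed

lemma sum_alt_zero: "(\<Sum>s<2*t. (-1::int)^s) = 0"
  by (induction t) (simp_all add: numeral_2_eq_2)

lemma sum_signs_H:
  assumes "finite Hm" "Hm \<subseteq> {..<M}" "even M"
  shows "(\<Sum>r\<in>{1..M}. (-1::int)^(k + r - 1) * (if M - r \<in> Hm then -1 else 1))
       = 2 * (-1)^k * parity_gap Hm"
proof -
  have bij: "bij_betw (\<lambda>s. M - s) {..<M} {1..M}"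
    by (rule bij_betw_byWitness[where f' = "\<lambda>r. M - r"]) auto
  have "(\<Sum>r\<in>{1..M}. (-1::int)^(k + r - 1) * (if M - r \<in> Hm then -1 else 1))
      = (\<Sum>s<M. (-1::int)^(k + (M - s) - 1) * (if M - (M - s) \<in> Hm then -1 else 1))"
    using sum.reindex_bij_betw[OF bij, of "\<lambda>r. (-1::int)^(k + r - 1) * (if M - r \<in> Hm then -1 else 1)"]
    by simp
  also have "\<dots> = (\<Sum>s<M. (-1)^k * (2 * (if s \<in> Hm then (-1)^s else 0) - (-1::int)^s))"
  proof (rule sum.cong[OF refl])
    fix s assume s: "s \<in> {..<M}"
    have p: "(-1::int)^(k + (M - s) - 1) = - ((-1)^k * (-1)^s)"
    proof -
      have "even (k + (M - s) - 1) \<longleftrightarrow> \<not> even (k + s)" using s assms(3) by simp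
      then show ?thesis by (simp add: minus_one_power_iff power_add[symmetric])
    qed
    show "(-1::int)^(k + (M - s) - 1) * (if M - (M - s) \<in> Hm then -1 else 1)
        = (-1)^k * (2 * (if s \<in> Hm then (-1)^s else 0) - (-1::int)^s)"
      using s unfolding p by auto
  qed
  also have "\<dots> = (-1)^k * (2 * (\<Sum>s<M. (if s \<in> Hm then (-1::int)^s else 0)) - (\<Sum>s<M. (-1::int)^s))"
  proof -
    have "(\<Sum>s<M. (-1)^k * (2 * (if s \<in> Hm then (-1)^s else 0) - (-1::int)^s))
        = (-1)^k * (\<Sum>s<M. 2 * (if s \<in> Hm then (-1)^s else 0) - (-1::int)^s)"
      by (rule sum_distrib_left[symmetric])
    also have "(\<Sum>s<M. 2 * (if s \<in> Hm then (-1)^s else 0) - (-1::int)^s)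
        = 2 * (\<Sum>s<M. (if s \<in> Hm then (-1::int)^s else 0)) - (\<Sum>s<M. (-1::int)^s)"
      by (simp only: sum_subtractf sum_distrib_left)
    finally show ?thesis .
  qed
  also have "(\<Sum>s<M. (-1::int)^s) = 0" using assms(3) sum_alt_zero by (metis evenE)
  also have "(\<Sum>s<M. (if s \<in> Hm then (-1::int)^s else 0)) = (\<Sum>s\<in>Hm. (-1::int)^s)"
  proof -
    have "(\<Sum>s<M. (if s \<in> Hm then (-1::int)^s else 0)) = (\<Sum>s\<in>{s\<in>{..<M}. s \<in> Hm}. (-1::int)^s)"
      by (rule sum.inter_filter[symmetric]) simp
    also have "{s\<in>{..<M}. s \<in> Hm} = Hm" using assms(2) by auto
    finally show ?thesis .
  qed
  also have "(\<Sum>s\<in>Hm. (-1::int)^s) = parity_gap Hm"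
  proof -
    have "(\<Sum>s\<in>Hm. (-1::int)^s) = (\<Sum>s\<in>Hm. if even s then 1 else -1)"
      by (rule sum.cong) auto
    also have "\<dots> = (\<Sum>s\<in>Hm \<inter> {s. even s}. 1) + (\<Sum>s\<in>Hm \<inter> - {s. even s}. -1)"
      by (rule sum.If_cases[OF assms(1)])
    also have "Hm \<inter> {s. even s} = {x\<in>Hm. even x}" by auto
    also have "Hm \<inter> - {s. even s} = {x\<in>Hm. odd x}" by auto
    finally show ?thesis unfolding parity_gap_def by simp
  qed
  finally show ?thesis by simp
qed

lemma hh_le_sum:
  assumes "is_partition mu" "i < length mu" shows "hh mu i \<le> sum_list mu"
proof -
  let ?L = "length mu"
  have s0: "sum_list mu = (\<Sum>j<?L. mu ! j)" by (simp add: sum_list_sum_nth atLeast0LessThan)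
  have s1: "(\<Sum>j<?L. mu ! j) = mu ! i + (\<Sum>j\<in>{..<?L} - {i}. mu ! j)"
    using assms(2) by (simp add: sum.remove)
  have s2: "(\<Sum>j\<in>{..<?L} - {i}. (1::nat)) \<le> (\<Sum>j\<in>{..<?L} - {i}. mu ! j)"
    by (rule sum_mono) (use part_pos[OF assms(1)] in auto)
  have s3: "(\<Sum>j\<in>{..<?L} - {i}. (1::nat)) = ?L - 1" using assms(2) by simp
  have "mu ! i + (?L - 1) \<le> sum_list mu" using s0 s1 s2 s3 by linarith
  then show ?thesis using hh_eq[OF assms] by simp
qed

lemma Od_core:
  assumes R: "R \<ge> 2" and m: "m < 2^(R-1)" and A: "finite A" "\<forall>x\<in>A. 0 < x \<and> x < 2^R" and b: "b > 0"
    and E: "a * fact m * fact (2^R) * (\<Prod>x\<in>A. x) = b * fact (m + 2^R) * (\<Prod>x\<in>A. 2^R - x)"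
  shows "Od a = Od b * ((-1)^card A * (if 2^(R-1) \<in> A then -1 else 1))"
proof -
  let ?N = "2^R :: nat" and ?M = "2^(R-1) :: nat"
  let ?P = "\<Prod>x\<in>A. x" and ?Q = "\<Prod>x\<in>A. ?N - x"
  have NM: "?N = 2 * ?M" using R by (metis One_nat_def Suc_diff_1 le_trans one_le_numeral power_Suc zero_less_iff_neq_zero not_one_le_zero)
  have P0: "?P > 0" using A by (simp add: prod_pos)
  have Q0: "?Q > 0" using A by (simp add: prod_pos)
  have "b * fact (m + 2^R) * ?Q > 0" using b Q0 by simp
  then have a0: "a > 0" using E by (metis mult_0 neq0_conv)
  have L: "Od (a * fact m * fact (2^R) * ?P) = Od a * Od (fact m) * Od (fact (2^R)) * Od ?P"
    using a0 P0 by (simp add: Od_mult)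
  have Rt: "Od (b * fact (m + 2^R) * ?Q) = Od b * Od (fact (m + 2^R)) * Od ?Q"
    using b Q0 by (simp add: Od_mult)
  have F: "Od (fact (m + 2^R)) = Od (fact (2^R)) * Od (fact m)"
    using Od_fact_shift[OF R m] by (simp add: add.commute)
  have OQ: "Od ?Q = (\<Prod>x\<in>A. (if x = ?M then 1 else -1)) * Od ?P"
  proof -
    have "Od ?Q = (\<Prod>x\<in>A. Od (?N - x))" using A by (simp add: Od_prod)
    also have "\<dots> = (\<Prod>x\<in>A. (if x = ?M then 1 else -1) * Od x)"
    proof (rule prod.cong[OF refl])
      fix x assume x: "x \<in> A"
      show "Od (?N - x) = (if x = ?M then 1 else -1) * Od x"
      proof (cases "x = ?M")
        case True then show ?thesis using NM by simp
      next
        case False then show ?thesis using Od_minus[of x R] x A by simp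
      qed
    qed
    also have "\<dots> = (\<Prod>x\<in>A. (if x = ?M then 1 else -1)) * Od ?P"
      using A by (simp add: prod.distrib Od_prod)
    finally show ?thesis .
  qed
  define c where "c = Od (fact m) * Od (fact (2^R)) * Od ?P"
  have cc: "c * c = 1" unfolding c_def using Od_sq[of "fact m"] Od_sq[of "fact (2^R)"] Od_sq[of ?P]
    by (simp add: algebra_simps)
  have "Od a * c = Od b * (\<Prod>x\<in>A. (if x = ?M then 1 else -1)) * c"
    using arg_cong[OF E, of Od] L Rt F OQ unfolding c_def by (simp add: mult_ac)
  then have "Od a * c * c = Od b * (\<Prod>x\<in>A. (if x = ?M then 1 else -1)) * c * c" by simp
  then have "Od a = Od b * (\<Prod>x\<in>A. (if x = ?M then 1 else -1))" using cc by (simp add: mult.assoc)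
  then show ?thesis using prod_sign[OF A(1), of ?M] by simp
qed

theorem lemma4p4:
  fixes R m :: nat and mu :: "nat list"
  assumes "R \<ge> 2" and "m < 2 ^ (R - 1)"
    and "is_partition mu" and "sum_list mu = m"
    and "odd (num_syt mu)"
  shows "(\<forall>r. 1 \<le> r \<and> r \<le> 2 ^ (R - 1) \<longrightarrow> 2 ^ R \<notin> shift (H mu) r)
         \<and> S_L (P2up R mu) mu = 2 * (-1) ^ card (H mu) * real_of_int (parity_gap (H mu))"
proof -
  note R = assms(1) and mM = assms(2) and pmu = assms(3) and smu = assms(4)
  define N where "N = (2::nat)^R"
  define M where "M = (2::nat)^(R-1)"
  define Hm where "Hm = H mu"
  define k where "k = card Hm"
  have NM: "N = 2 * M" unfolding N_def M_def using R
    by (metis One_nat_def Suc_diff_1 le_trans one_le_numeral power_Suc zero_less_iff_neq_zero not_one_le_zero)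
  have Mev: "even M" unfolding M_def using R by (simp add: even_power)
  have finH: "finite Hm" unfolding Hm_def by (rule finite_H)
  have Hlt: "\<forall>x\<in>Hm. x < M"
  proof
    fix x assume "x \<in> Hm"
    then obtain i where "i < length mu" "x = hh mu i" unfolding Hm_def H_eq by blast
    then have "x \<le> m" using hh_le_sum[OF pmu] smu by simp
    then show "x < M" using mM M_def by simp
  qed
  define X where "X r = shift Hm r" for r
  define Y where "Y r = (X r \<union> {N}) - {0}" for r
  have part1: "\<forall>r. 1 \<le> r \<and> r \<le> M \<longrightarrow> N \<notin> X r"
  proof (intro allI impI)
    fix r assume r: "1 \<le> r \<and> r \<le> M"
    show "N \<notin> X r"
    proof
      assume "N \<in> X r"
      then consider (a) x where "x \<in> Hm" "N = x + r" | (b) "N < r" unfolding X_def shift_def by auto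
      then show False
      proof cases
        case a then show False using Hlt r NM by fastforce
      next
        case b then show False using r NM by simp
      qed
    qed
  qed
  have finX: "finite (X r)" for r unfolding X_def by (rule finite_shift[OF finH])
  have X0: "0 \<in> X r" if "1 \<le> r" for r using that unfolding X_def shift_def by auto
  have XltN: "\<forall>x\<in>X r. x < N" if "1 \<le> r" "r \<le> M" for r
  proof
    fix x assume "x \<in> X r"
    then consider (a) y where "y \<in> Hm" "x = y + r" | (b) "x < r" unfolding X_def shift_def by auto
    then show "x < N"
    proof cases
      case a then show ?thesis using Hlt that NM by fastforce
    next
      case b then show ?thesis using that NM by simp
    qed
  qed
  have cardX: "card (X r) = k + r" for r
  proof -
    have "X r = (\<lambda>x. x + r) ` Hm \<union> {0..<r}" unfolding X_def shift_def ..
    moreover have "card ((\<lambda>x. x + r) ` Hm) = k" unfolding k_def by (simp add: card_image inj_on_def)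
    moreover have "(\<lambda>x. x + r) ` Hm \<inter> {0..<r} = {}" by auto
    ultimately show ?thesis using finH by (simp add: card_Un_disjoint)
  qed
  have Yeq: "Y r = insert N (X r - {0})" for r unfolding Y_def N_def by auto
  have cardY: "card (Y r) = k + r" if "1 \<le> r" "r \<le> M" for r
  proof -
    have "N \<notin> X r - {0}" using part1 that by auto
    then have "card (Y r) = Suc (card (X r - {0}))" unfolding Yeq using finX by simp
    also have "card (X r - {0}) = card (X r) - 1" using X0 that finX by simp
    finally show ?thesis using cardX[of r] that by simp
  qed
  have lamr: "is_partition (lam_r R mu r) \<and> H (lam_r R mu r) = Y r" if "1 \<le> r" "r \<le> M" for r
  proof -
    have "finite (Y r)" "0 \<notin> Y r" unfolding Y_def using finX by auto
    then have ex: "\<exists>!lam. is_partition lam \<and> H lam = Y r" by (rule part_ex1)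
    have "lam_r R mu r = (THE lam. is_partition lam \<and> H lam = Y r)"
      unfolding lam_r_def Y_def X_def Hm_def N_def ..
    then show ?thesis using theI'[OF ex] by simp
  qed
  have cellsX: "cellsB (X r) = cells mu" for r
    unfolding X_def Hm_def using cellsB_shift_r[OF finite_H] cells_eq[OF pmu] by simp
  have cardc: "card (cells mu) = m" using card_cells smu by simp
  have numu: "real (num_syt mu) = FF (X r)" for r
  proof -
    have "real (num_syt mu) = FF Hm" unfolding Hm_def by (rule num_syt_FF[OF pmu])
    also have "FF Hm = real (card (SYTs (cellsB Hm)))" using hook_formula[OF finH refl] by simp
    also have "cellsB Hm = cellsB (X r)" using cellsX cells_eq[OF pmu] Hm_def by simp
    also have "real (card (SYTs (cellsB (X r)))) = FF (X r)" using hook_formula[OF finX refl] by simp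
    finally show ?thesis .
  qed
  have numu0: "num_syt mu > 0" using assms(5) by (simp add: odd_pos)
  define sg where "sg r = (-1::int)^card (X r - {0}) * (if M \<in> X r - {0} then -1 else 1)" for r
  have Odr: "Od (num_syt (lam_r R mu r)) = Od (num_syt mu) * sg r" if r: "1 \<le> r" "r \<le> M" for r
  proof -
    let ?l = "lam_r R mu r"
    let ?A = "X r - {0}"
    have pl: "is_partition ?l" and Hl: "H ?l = Y r" using lamr[OF r] by auto
    have "FF (Y r) * fact (card (cellsB (X r))) * fact N * (\<Prod>x\<in>?A. real x)
       = FF (X r) * fact (card (cellsB (X r)) + N) * (\<Prod>x\<in>?A. real (N - x))"
      unfolding Yeq using ratio[OF finX X0[OF r(1)] XltN[OF r]] .
    then have "real (num_syt ?l) * real (fact m) * real (fact N) * real (\<Prod>x\<in>?A. x)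
       = real (num_syt mu) * real (fact (m + N)) * real (\<Prod>x\<in>?A. N - x)"
      using num_syt_FF[OF pl] Hl numu[of r] cellsX[of r] cardc by (simp add: of_nat_prod)
    then have E: "num_syt ?l * fact m * fact N * (\<Prod>x\<in>?A. x) = num_syt mu * fact (m + N) * (\<Prod>x\<in>?A. N - x)"
      by (simp only: of_nat_mult[symmetric] of_nat_eq_iff)
    have A: "finite ?A" "\<forall>x\<in>?A. 0 < x \<and> x < 2^R" using finX XltN[OF r] N_def by auto
    show ?thesis using Od_core[OF R mM A numu0 E[unfolded N_def]] unfolding sg_def M_def by simp
  qed
  have sgr: "sg r = (-1::int)^(k + r - 1) * (if M - r \<in> Hm then -1 else 1)" if r: "1 \<le> r" "r \<le> M" for r
  proof -
    have "card (X r - {0}) = k + r - 1" using cardX[of r] X0[OF r(1)] finX by simp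
    moreover have "M \<in> X r - {0} \<longleftrightarrow> M - r \<in> Hm"
    proof
      assume "M \<in> X r - {0}"
      then consider (a) y where "y \<in> Hm" "M = y + r" | (b) "M < r" unfolding X_def shift_def by auto
      then show "M - r \<in> Hm"
      proof cases
        case a then show ?thesis by simp
      next
        case b then show ?thesis using r by simp
      qed
    next
      assume "M - r \<in> Hm"
      then have "M \<in> (\<lambda>x. x + r) ` Hm" using r by (auto intro!: image_eqI[of _ _ "M - r"])
      moreover have "M \<noteq> 0" unfolding M_def by simp
      ultimately show "M \<in> X r - {0}" unfolding X_def shift_def by auto
    qed
    ultimately show ?thesis unfolding sg_def by simp
  qed
  have P2: "P2up R mu = (lam_r R mu) ` {1..M}" unfolding P2up_def M_def by auto
  have inj: "inj_on (lam_r R mu) {1..M}"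
  proof (rule inj_onI)
    fix r1 r2 assume r1: "r1 \<in> {1..M}" and r2: "r2 \<in> {1..M}" and e: "lam_r R mu r1 = lam_r R mu r2"
    have r1': "1 \<le> r1" "r1 \<le> M" and r2': "1 \<le> r2" "r2 \<le> M" using r1 r2 by auto
    have h1: "H (lam_r R mu r1) = Y r1" using lamr[OF r1'] by blast
    have h2: "H (lam_r R mu r2) = Y r2" using lamr[OF r2'] by blast
    have "Y r1 = Y r2" using h1 h2 e by simp
    then have "card (Y r1) = card (Y r2)" by (rule arg_cong)
    then show "r1 = r2" using cardY[OF r1'] cardY[OF r2'] by linarith
  qed
  have "(\<Sum>lam\<in>P2up R mu. real_of_int (Od (num_syt lam))) = (\<Sum>r\<in>{1..M}. real_of_int (Od (num_syt (lam_r R mu r))))"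
    unfolding P2 by (rule sum.reindex[OF inj, unfolded comp_def])
  also have "\<dots> = (\<Sum>r\<in>{1..M}. real_of_int (Od (num_syt mu)) * real_of_int ((-1::int)^(k + r - 1) * (if M - r \<in> Hm then -1 else 1)))"
    by (rule sum.cong[OF refl]) (simp add: Odr sgr)
  also have "\<dots> = real_of_int (Od (num_syt mu)) * real_of_int (\<Sum>r\<in>{1..M}. (-1::int)^(k + r - 1) * (if M - r \<in> Hm then -1 else 1))"
    by (simp add: sum_distrib_left)
  also have "(\<Sum>r\<in>{1..M}. (-1::int)^(k + r - 1) * (if M - r \<in> Hm then -1 else 1)) = 2 * (-1)^k * parity_gap Hm"
    by (rule sum_signs_H[OF finH _ Mev]) (use Hlt in auto)
  finally have S: "(\<Sum>lam\<in>P2up R mu. real_of_int (Od (num_syt lam))) = real_of_int (Od (num_syt mu)) * real_of_int (2 * (-1)^k * parity_gap Hm)" .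
  have "S_L (P2up R mu) mu = 2 * (-1) ^ card (H mu) * real_of_int (parity_gap (H mu))"
    unfolding S_L_def S using Od_pm[of "num_syt mu"] k_def Hm_def by auto
  moreover have "\<forall>r. 1 \<le> r \<and> r \<le> 2 ^ (R - 1) \<longrightarrow> 2 ^ R \<notin> shift (H mu) r"
    using part1 unfolding X_def Hm_def N_def M_def .
  ultimately show ?thesis by simp
qed

end
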